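(* Under the standing setup below, let $\mathbf u(\cdot)$ be any (locally integrable) input signal and $\mathbf d(\cdot)$ any disturbance with $\|\mathbf d(t)\|\le\bar d$ for all $t\ge0$. Let $\mathbf x(t)$ solve $\dot{\mathbf x}=\mathbf A\mathbf x+\mathbf f_{\mathrm{nl}}(\mathbf x)+\mathbf B\mathbf u+\mathbf d$, let $\mathbf z_r(t)$ solve the nominal prediction model $\dot{\mathbf z}_r=\mathbf A_r\mathbf z_r+\mathbf r_{\mathrm{nl}}(\mathbf z_r)+\mathbf B_r\mathbf u$, and let the scalars $s(t),\delta(t)$ solve $$\dot s=\lambda_{\mathbf A_n}s+(1+L_{\mathbf w})(L_{\mathbf f}s+\bar d)+\|\mathbf B_n\mathbf u\|+L_{\mathbf w}\|\mathbf B_r\mathbf u\|,\qquad \dot\delta=(\lambda_{\mathbf A_r}+L_{\mathbf r})\delta+L_{\mathbf f}s+\bar d,$$ with $s(0),\delta(0)\ge0$. With $\mathbf x_r=\mathbf V_r^\top\mathbf x$ and $\tilde{\mathbf x}_n:=\mathbf V_n^\top\mathbf x-\mathbf V_n^\top\mathbf w_{\mathrm{nl}}(\mathbf x_r)$, suppose $\|\tilde{\mathbf x}_n(0)\|\le s(0)$ and $\|\mathbf x_r(0)-\mathbf z_r(0)\|\le\delta(0)$. Then for all $t\ge0$, $$\|\tilde{\mathbf x}_n(t)\|\le s(t),\qquad \|\mathbf x_r(t)-\mathbf z_r(t)\|\le\delta(t).$$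
   Context: Standing setup. Let $n_f>n\ge1$ and $m\ge1$; $\|\cdot\|$ is the Euclidean norm and its induced matrix norm. Consider $\dot{\mathbf x}(t)=\mathbf A\mathbf x(t)+\mathbf f_{\mathrm{nl}}(\mathbf x(t))+\mathbf B\mathbf u(t)+\mathbf d(t)$ with $\mathbf x\in\mathbb R^{n_f}$, $\mathbf u\in\mathbb R^m$, $\mathbf B\in\mathbb R^{n_f\times m}$, and a disturbance with $\|\mathbf d(t)\|\le\bar d$ for all $t\ge0$. The matrix $\mathbf A$ is Hurwitz, semi-simple, and in real block-diagonal form $\mathbf A=\mathrm{diag}(\mathbf A_r,\mathbf A_n)$ with $\mathbf A_r\in\mathbb R^{n\times n}$, $\mathbf A_n\in\mathbb R^{(n_f-n)\times(n_f-n)}$, each diagonal block being either a real scalar or a $2\times2$ block $\begin{pmatrix}a&b\\-b&a\end{pmatrix}$ (blocks ordered from slowest to fastest modes). The map $\mathbf f_{\mathrm{nl}}:\mathbb R^{n_f}\to\mathbb R^{n_f}$ is $C^\infty$, satisfies $\mathbf f_{\mathrm{nl}}(0)=0$, $D\mathbf f_{\mathrm{nl}}(0)=0$, and is globally $L_{\mathbf f}$-Lipschitz. Let $\mathbf V_r=\begin{bmatrix}\mathbf I_n\\ \mathbf 0\end{bmatrix}\in\mathbb R^{n_f\times n}$, $\mathbf V_n=\begin{bmatrix}\mathbf 0\\ \mathbf I_{n_f-n}\end{bmatrix}\in\mathbb R^{n_f\times(n_f-n)}$, so $\mathbf A_r=\mathbf V_r^\top\mathbf A\mathbf V_r$, $\mathbf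 A_n=\mathbf V_n^\top\mathbf A\mathbf V_n$, and write $\mathbf x_r:=\mathbf V_r^\top\mathbf x$, $\mathbf x_n:=\mathbf V_n^\top\mathbf x$. The manifold (spectral submanifold) is parametrized by $\mathbf W(\mathbf x_r)=\mathbf V_r\mathbf x_r+\mathbf w_{\mathrm{nl}}(\mathbf x_r)$, where $\mathbf w_{\mathrm{nl}}:\mathbb R^n\to\mathbb R^{n_f}$ is continuously differentiable and $L_{\mathbf w}$-Lipschitz, and satisfies (invertibility) $\mathbf V_r^\top\mathbf W(\mathbf x_r)=\mathbf x_r$ for all $\mathbf x_r$, and (invariance) there is a vector field $\mathbf g:\mathbb R^n\to\mathbb R^n$ with $\mathbf A\mathbf W(\mathbf x_r)+\mathbf f_{\mathrm{nl}}(\mathbf W(\mathbf x_r))=D\mathbf W(\mathbf x_r)\,\mathbf g(\mathbf x_r)$ for all $\mathbf x_r\in\mathbb R^n$. Define $\mathbf r_{\mathrm{nl}}(\mathbf x_r):=\mathbf V_r^\top\mathbf f_{\mathrm{nl}}(\mathbf W(\mathbf x_r))$ and $\mathbf r(\mathbf x_r):=\mathbf A_r\mathbf x_r+\mathbf r_{\mathrm{nl}}(\mathbf x_r)$. Additional notation: $\mathbf B_r:=\mathbf V_r^\top\mathbf B$, $\mathbf B_n:=\mathbf V_n^\top\mathbf B$; $\mathbf r_{\mathrm{nl}}$ is $L_{\mathbf r}$-Lipschitz; $\lambda_{\mathbf A_n}$ and $\lambda_{\mathbf A_r}$ denote the largest real part among the eigenvalues of $\mathbf A_n$ and $\mathbf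 A_r$, respectively. *)

theory Defs
  imports "HOL-Analysis.Analysis"
begin

text \<open>Complexification of a real square matrix and its (complex) spectrum:
  the roots of the characteristic polynomial det(lambda I - M).\<close>
definition cmat :: "real^'n^'n \<Rightarrow> complex^'n^'n" where
  "cmat M = (\<chi> i j. complex_of_real (M $ i $ j))"

definition cspec :: "real^'n^'n \<Rightarrow> complex set" where
  "cspec M = {c. det (mat c - cmat M) = 0}"

text \<open>Hurwitz: all eigenvalues have negative real part.\<close>
definition hurwitz :: "real^'n^'n \<Rightarrow> bool" where
  "hurwitz M \<longleftrightarrow> (\<forall>c\<in>cspec M. Re c < 0)"

text \<open>Largest real part among the eigenvalues.\<close>
definition max_re_eig :: "real^'n^'n \<Rightarrow> real" where
  "max_re_eig M = Max (Re ` cspec M)"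

text \<open>Real block-diagonal form: the index set (ordered by the linear order of
  the index type) is split into consecutive blocks of size 1 or 2 via an
  involution p (p i = i: scalar block; p i \<noteq> i: i and p i are adjacent and
  form a 2x2 block [[a,b],[-b,a]]); all entries outside the blocks vanish.
  The blocks are ordered from slowest to fastest, i.e. the real parts
  (diagonal entries) are non-increasing along the index order.\<close>
definition real_block_diag :: "real^('k::{finite,linorder})^('k::{finite,linorder}) \<Rightarrow> bool" where
  "real_block_diag M \<longleftrightarrow> (\<exists>p :: 'k \<Rightarrow> 'k.
      (\<forall>i. p (p i) = i) \<and>
      (\<forall>i k. \<not> (i < k \<and> k < p i)) \<and>
      (\<forall>i j. j \<noteq> i \<and> j \<noteq> p i \<longrightarrow> M $ i $ j = 0) \<and>
      (\<forall>i. p i \<noteq> i \<longrightarrow> M $ (p i) $ (p i) = M $ i $ i \<and> M $ i $ (p i) = - M $ (p i) $ i))"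

definition ordered_slow_to_fast :: "real^('k::{finite,linorder})^('k::{finite,linorder}) \<Rightarrow> bool" where
  "ordered_slow_to_fast M \<longleftrightarrow> (\<forall>i j :: 'k. i \<le> j \<longrightarrow> M $ j $ j \<le> M $ i $ i)"

text \<open>Iterated (Frechet) directional derivatives; C-infinity means all of them
  exist everywhere as Frechet derivatives.\<close>
primrec iter_dderiv :: "('a::real_normed_vector \<Rightarrow> 'b::real_normed_vector) \<Rightarrow> 'a list \<Rightarrow> 'a \<Rightarrow> 'b" where
  "iter_dderiv f [] = f"
| "iter_dderiv f (v # vs) = (\<lambda>x. frechet_derivative (iter_dderiv f vs) (at x) v)"

definition smooth_everywhere :: "('a::real_normed_vector \<Rightarrow> 'b::real_normed_vector) \<Rightarrow> bool" where
  "smooth_everywhere f \<longleftrightarrow> (\<forall>vs x. iter_dderiv f vs differentiable (at x))"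

end

theory Submission
  imports Defs
begin

(* ---- Spec ---- *)
lemma bd_apply:
  fixes M :: "'a::comm_ring_1^'k::finite^'k"
  assumes z: "\<forall>i j. j \<noteq> i \<and> j \<noteq> p i \<longrightarrow> M$i$j = 0"
  shows "(M *v v)$j = M$j$j * v$j + (if p j \<noteq> j then M$j$(p j) * v$(p j) else 0)"
proof -
  have "(M *v v)$j = (\<Sum>k\<in>UNIV. M$j$k * v$k)" by (simp add: matrix_vector_mult_def)
  also have "\<dots> = (\<Sum>k\<in>{j, p j}. M$j$k * v$k)"
    by (rule sum.mono_neutral_right) (use z in auto)
  also have "\<dots> = M$j$j * v$j + (if p j \<noteq> j then M$j$(p j) * v$(p j) else 0)"
    by (cases "p j = j") auto
  finally show ?thesis .
qed

lemma quad_form_le: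
  fixes M :: "real^('k::{finite,linorder})^('k::{finite,linorder})"
  assumes bd: "real_block_diag M" and le: "\<And>i. M$i$i \<le> lam"
  shows "v \<bullet> (M *v v) \<le> lam * (norm v)^2"
proof -
  obtain p where p1: "\<forall>i. p (p i) = i" and z: "\<forall>i j. j \<noteq> i \<and> j \<noteq> p i \<longrightarrow> M $ i $ j = 0"
    and sk: "\<forall>i. p i \<noteq> i \<longrightarrow> M $ (p i) $ (p i) = M $ i $ i \<and> M $ i $ (p i) = - M $ (p i) $ i"
    using bd unfolding real_block_diag_def by blast
  define c where "c i = v$i * (if p i \<noteq> i then M$i$(p i) * v$(p i) else 0)" for i
  have bij: "bij p" using p1 by (metis bijI' )
  have "sum c UNIV = sum (c \<circ> p) UNIV"
    using sum.reindex[of p UNIV c] bij by (simp add: bij_betw_def)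
  also have "\<dots> = - sum c UNIV"
    unfolding sum_negf[symmetric]
  proof (rule sum.cong[OF refl])
    fix i
    show "(c \<circ> p) i = - c i"
    proof (cases "p i = i")
      case True then show ?thesis by (simp add: c_def)
    next
      case False
      then have "p i \<noteq> p (p i)" using p1 by metis
      then show ?thesis using False sk p1 by (auto simp: c_def)
    qed
  qed
  finally have c0: "sum c UNIV = 0" by simp
  have "v \<bullet> (M *v v) = (\<Sum>i\<in>UNIV. v$i * (M$i$i * v$i) + c i)"
    unfolding inner_vec_def bd_apply[OF z] c_def by (simp add: algebra_simps)
  also have "\<dots> = (\<Sum>i\<in>UNIV. M$i$i * (v$i)^2)"
    by (simp add: sum.distrib c0 power2_eq_square algebra_simps)
  also have "\<dots> \<le> (\<Sum>i\<in>UNIV. lam * (v$i)^2)"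
    by (rule sum_mono) (simp add: le mult_right_mono)
  also have "\<dots> = lam * (norm v)^2"
    by (simp add: sum_distrib_left norm_vec_def L2_set_def real_norm_def sum_nonneg)
  finally show ?thesis .
qed

(* ---- Spec2 ---- *)
lemma det_zero_iff_kernel:
  fixes A :: "'a::field^'n::finite^'n"
  shows "det A = 0 \<longleftrightarrow> (\<exists>v. v \<noteq> 0 \<and> A *v v = 0)"
proof -
  have "det A = 0 \<longleftrightarrow> \<not> inj ((*v) A)"
    using invertible_det_nz[of A] invertible_left_inverse[of A] matrix_left_invertible_injective[of A]
    by blast
  also have "\<dots> \<longleftrightarrow> (\<exists>v. v \<noteq> 0 \<and> A *v v = 0)"
  proof
    assume "\<not> inj ((*v) A)"
    then obtain a b where "a \<noteq> b" "A *v a = A *v b" unfolding inj_def by blast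
    then show "\<exists>v. v \<noteq> 0 \<and> A *v v = 0"
      by (intro exI[of _ "a - b"]) (simp add: matrix_vector_mult_diff_distrib)
  next
    assume "\<exists>v. v \<noteq> 0 \<and> A *v v = 0"
    then obtain v where "v \<noteq> 0" "A *v v = 0" by blast
    then show "\<not> inj ((*v) A)" unfolding inj_def
      by (metis matrix_vector_mult_0_right)
  qed
  finally show ?thesis .
qed

lemma cmat_zero:
  assumes "\<forall>i j. j \<noteq> i \<and> j \<noteq> p i \<longrightarrow> M $ i $ j = 0"
  shows "\<forall>i j. j \<noteq> i \<and> j \<noteq> p i \<longrightarrow> cmat M $ i $ j = 0"
  using assms by (simp add: cmat_def)

lemma mat_c_apply: "((mat c - B) *v v) $ j = c * v$j - (B *v v)$j"
  for B :: "'a::comm_ring_1^'n::finite^'n"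
proof -
  have "(\<Sum>k\<in>UNIV. (if j = k then c else 0) * v$k) = c * v$j"
    by (simp add: if_distrib[where f="\<lambda>x. x * _"] cong: if_cong)
  then show ?thesis
    by (simp add: matrix_vector_mult_def mat_def left_diff_distrib sum_subtractf)
qed

lemma re_sq_eq:
  fixes z :: complex and b :: real
  assumes "z * z = - (of_real b * of_real b)"
  shows "Re z = 0"
proof (rule ccontr)
  assume "Re z \<noteq> 0"
  have "Im (z*z) = 0" using assms by simp
  then have "Re z * Im z = 0" by (simp add: algebra_simps)
  then have "Im z = 0" using \<open>Re z \<noteq> 0\<close> by (simp only: mult_eq_0_iff) blast
  have "Re (z*z) = - b*b" using assms by simp
  then have "Re z * Re z = - b * b" using \<open>Im z = 0\<close> by simp
  moreover have "Re z * Re z > 0" using \<open>Re z \<noteq> 0\<close> by (auto simp: zero_less_mult_iff)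
  moreover have "b * b \<ge> 0" by simp
  ultimately show False by linarith
qed

lemma diag_le_max_re_eig:
  fixes M :: "real^('k::{finite,linorder})^('k::{finite,linorder})"
  assumes bd: "real_block_diag M"
  shows "M$i$i \<le> max_re_eig M"
proof -
  obtain p where p1: "\<forall>i. p (p i) = i" and z: "\<forall>i j. j \<noteq> i \<and> j \<noteq> p i \<longrightarrow> M $ i $ j = 0"
    and sk: "\<forall>i. p i \<noteq> i \<longrightarrow> M $ (p i) $ (p i) = M $ i $ i \<and> M $ i $ (p i) = - M $ (p i) $ i"
    using bd unfolding real_block_diag_def by blast
  note cz = bd_apply[OF cmat_zero[OF z]]
  have sub: "Re ` cspec M \<subseteq> range (\<lambda>i. M$i$i)"
  proof
    fix r assume "r \<in> Re ` cspec M"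
    then obtain c where c: "c \<in> cspec M" "r = Re c" by blast
    then obtain v where v: "v \<noteq> 0" "(mat c - cmat M) *v v = 0"
      unfolding cspec_def det_zero_iff_kernel by blast
    have ev: "c * v$j = (cmat M *v v)$j" for j
      using arg_cong[OF v(2), of "\<lambda>w. w$j"] by (simp add: mat_c_apply)
    obtain j where j: "v$j \<noteq> 0" using v(1) by (metis vec_eq_iff zero_index)
    let ?a = "M$j$j" and ?b = "M$j$(p j)"
    have "Re c = ?a"
    proof (cases "p j = j")
      case True
      then have "c * v$j = of_real ?a * v$j" using ev[of j] cz[of v j] by (simp add: cmat_def)
      then show ?thesis using j by simp
    next
      case False
      have pj: "p (p j) = j" using p1 by blast
      have e1: "(c - of_real ?a) * v$j = of_real ?b * v$(p j)"
        using ev[of j] cz[of v j] False by (simp add: cmat_def algebra_simps)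
      have "M$(p j)$(p j) = ?a" "M$(p j)$j = - ?b" using sk False by auto
      then have e2: "(c - of_real ?a) * v$(p j) = - of_real ?b * v$j"
        using ev[of "p j"] cz[of v "p j"] False pj by (auto simp: cmat_def algebra_simps)
      have "(c - of_real ?a) * (c - of_real ?a) * v$j = - (of_real ?b * of_real ?b) * v$j"
      proof -
        have "(c - of_real ?a) * (c - of_real ?a) * v$j = (c - of_real ?a) * (of_real ?b * v$(p j))"
          using e1 by (simp add: mult.assoc)
        also have "\<dots> = of_real ?b * ((c - of_real ?a) * v$(p j))" by (simp add: algebra_simps)
        also have "\<dots> = - (of_real ?b * of_real ?b) * v$j" using e2 by simp
        finally show ?thesis .
      qed
      then have "(c - of_real ?a) * (c - of_real ?a) = - (of_real ?b * of_real ?b)"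
        using j by (metis mult_minus_left mult_right_cancel)
      then have "Re (c - of_real ?a) = 0" by (rule re_sq_eq)
      then show ?thesis by simp
    qed
    then show "r \<in> range (\<lambda>i. M$i$i)" using c by auto
  qed
  have fin: "finite (Re ` cspec M)" by (rule finite_subset[OF sub]) simp
  define c where "c = of_real (M$i$i) + (if p i \<noteq> i then \<i> * of_real (M$i$(p i)) else 0)"
  define v :: "complex^('k::{finite,linorder})" where "v = (\<chi> j. if j = i then 1 else if j = p i \<and> p i \<noteq> i then \<i> else 0)"
  have vi: "v$i = 1" by (simp add: v_def)
  have vpi: "v$(p i) = \<i>" if "p i \<noteq> i" using that by (simp add: v_def)
  have vo: "v$j = 0" if "j \<noteq> i" "j \<noteq> p i" for j using that by (simp add: v_def)
  have ce: "cmat M $ a $ b = of_real (M$a$b)" for a b by (simp add: cmat_def)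
  have "(mat c - cmat M) *v v = 0"
  proof (subst vec_eq_iff, intro allI)
    fix j
    have pi: "p (p i) = i" using p1 by blast
    show "((mat c - cmat M) *v v) $ j = 0 $ j"
    proof (cases "j = i")
      case True
      show ?thesis
      proof (cases "p i = i")
        case True
        then show ?thesis using \<open>j = i\<close> unfolding mat_c_apply cz ce by (simp add: vi c_def)
      next
        case False
        then show ?thesis using \<open>j = i\<close> unfolding mat_c_apply cz ce by (simp add: vi vpi c_def)
      qed
    next
      case ji: False
      show ?thesis
      proof (cases "j = p i")
        case True
        then have ne: "p i \<noteq> i" using ji by simp
        have m1: "M$(p i)$(p i) = M$i$i" "M$(p i)$i = - M$i$(p i)" using sk ne by auto
        have "((mat c - cmat M) *v v) $ (p i) = c * \<i> - (of_real (M$i$i) * \<i> + of_real (- M$i$(p i)) * 1)"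
          unfolding mat_c_apply cz ce using ne pi m1 vi vpi by simp
        also have "\<dots> = 0" using ne by (simp add: c_def algebra_simps)
        finally show ?thesis using True by simp
      next
        case False
        have "p j \<noteq> i" using False p1 by metis
        moreover have "p j \<noteq> p i" using ji p1 by metis
        ultimately show ?thesis using False ji vo unfolding mat_c_apply cz by simp
      qed
    qed
  qed
  moreover have "v \<noteq> 0"
  proof
    assume "v = 0"
    then have "v$i = 0" by simp
    with vi show False by simp
  qed
  ultimately have cin: "c \<in> cspec M" unfolding cspec_def det_zero_iff_kernel by blast
  have "Re c = M$i$i" by (simp add: c_def)
  then have "M$i$i \<in> Re ` cspec M" using rev_image_eqI[OF cin, of "M$i$i" Re] by simp
  then show ?thesis unfolding max_re_eig_def using fin by simp
qed

(* ---- GC ---- *)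
lemma uc_interval:
  fixes f :: "real \<Rightarrow> 'a::metric_space"
  assumes "continuous_on {a..b} f" "e > 0"
  shows "\<exists>d>0. \<forall>x\<in>{a..b}. \<forall>x'\<in>{a..b}. \<bar>x' - x\<bar> < d \<longrightarrow> dist (f x') (f x) < e"
proof -
  have "uniformly_continuous_on {a..b} f"
    using assms(1) by (rule compact_uniformly_continuous) simp
  then show ?thesis using assms(2) unfolding uniformly_continuous_on_def dist_real_def by blast
qed

lemma integral_split0:
  fixes F :: "real \<Rightarrow> 'a::banach"
  assumes "F integrable_on {0..t'}" "0 \<le> t" "t \<le> t'"
  shows "integral {t..t'} F = integral {0..t'} F - integral {0..t} F"
  using Henstock_Kurzweil_Integration.integral_combine[OF assms(2,3,1)] by (simp add: algebra_simps)

lemma gc: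
  fixes N S q rho :: "real \<Rightarrow> real" and k T :: real
  assumes T: "T \<ge> 0" and init: "N 0 \<le> S 0"
    and contS: "continuous_on {0..T} S"
    and Ssol: "\<And>t. t \<in> {0..T} \<Longrightarrow> ((\<lambda>\<tau>. k * S \<tau> + q \<tau>) has_integral (S t - S 0)) {0..t}"
    and rho_int: "rho integrable_on {0..T}" and rho_nn: "\<And>\<tau>. rho \<tau> \<ge> 0"
    and loc: "\<And>\<epsilon>. \<epsilon> > 0 \<Longrightarrow> \<exists>\<eta>>0. \<forall>t t'. 0 \<le> t \<longrightarrow> t \<le> t' \<longrightarrow> t' \<le> T \<longrightarrow> t' - t < \<eta> \<longrightarrow>
        N t' \<le> N t + (t' - t) * k * N t + integral {t..t'} q + \<epsilon> * ((t' - t) + integral {t..t'} rho)"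
  shows "N T \<le> S T"
proof -
  define P where "P t = max (N t - S t) 0" for t
  define R where "R t = integral {0..t} rho" for t
  define K where "K = \<bar>k\<bar>"
  have K0: "K \<ge> 0" by (simp add: K_def)
  have intkq: "(\<lambda>\<tau>. k * S \<tau> + q \<tau>) integrable_on {0..T}" using Ssol[of T] T by auto
  have intS: "S integrable_on {0..T}" using contS by (rule integrable_continuous_interval)
  have intq: "q integrable_on {0..T}"
  proof -
    have "(\<lambda>\<tau>. (k * S \<tau> + q \<tau>) - k * S \<tau>) integrable_on {0..T}"
      using intkq intS by (intro integrable_diff integrable_cmul[where 'b=real, simplified]) auto
    then show ?thesis by simp
  qed
  have Rdiff: "R t' - R t = integral {t..t'} rho" if "0 \<le> t" "t \<le> t'" "t' \<le> T" for t t'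
    unfolding R_def using integral_split0[of rho t' t] integrable_subinterval_real[OF rho_int, of 0 t'] that
    by auto
  have rho_sub: "integral {t..t'} rho \<ge> 0" if "0 \<le> t" "t \<le> t'" "t' \<le> T" for t t'
    using integrable_subinterval_real[OF rho_int, of t t'] that by (intro integral_nonneg) (auto simp: rho_nn)
  have R0: "R t \<ge> 0" if "0 \<le> t" "t \<le> T" for t
    using rho_sub[of 0 t] that by (simp add: R_def)
  have Sdiff: "S t' - S t = k * integral {t..t'} S + integral {t..t'} q"
    if "0 \<le> t" "t \<le> t'" "t' \<le> T" for t t'
  proof -
    have i1: "integral {0..t'} (\<lambda>\<tau>. k * S \<tau> + q \<tau>) = S t' - S 0" using Ssol[of t'] that by auto
    have i2: "integral {0..t} (\<lambda>\<tau>. k * S \<tau> + q \<tau>) = S t - S 0" using Ssol[of t] that by auto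
    have "integral {t..t'} (\<lambda>\<tau>. k * S \<tau> + q \<tau>) = S t' - S t"
      using integral_split0[of "\<lambda>\<tau>. k * S \<tau> + q \<tau>" t' t] integrable_subinterval_real[OF intkq, of 0 t'] that i1 i2
      by auto
    moreover have "integral {t..t'} (\<lambda>\<tau>. k * S \<tau> + q \<tau>) = k * integral {t..t'} S + integral {t..t'} q"
      using integrable_subinterval_real[OF intS, of t t'] integrable_subinterval_real[OF intq, of t t'] that
      by (simp add: integral_add integrable_cmul[where 'b=real, simplified] integral_mult_right)
    ultimately show ?thesis by simp
  qed
  have step: "\<exists>\<eta>>0. \<forall>t t'. 0 \<le> t \<longrightarrow> t \<le> t' \<longrightarrow> t' \<le> T \<longrightarrow> t' - t < \<eta> \<longrightarrow>
       P t' \<le> (1 + K * (t' - t)) * P t + \<epsilon> * ((t' - t) + (R t' - R t))" if e: "\<epsilon> > 0" for \<epsilon>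
  proof -
    obtain \<eta>1 where \<eta>1: "\<eta>1 > 0" and L: "\<forall>t t'. 0 \<le> t \<longrightarrow> t \<le> t' \<longrightarrow> t' \<le> T \<longrightarrow> t' - t < \<eta>1 \<longrightarrow>
        N t' \<le> N t + (t' - t) * k * N t + integral {t..t'} q + (\<epsilon>/2) * ((t' - t) + integral {t..t'} rho)"
      using loc[of "\<epsilon>/2"] e by auto
    obtain \<eta>2 where \<eta>2: "\<eta>2 > 0" and U: "\<forall>x\<in>{0..T}. \<forall>x'\<in>{0..T}. \<bar>x' - x\<bar> < \<eta>2 \<longrightarrow> dist (S x') (S x) < \<epsilon> / (2 * (K + 1))"
      using uc_interval[OF contS, of "\<epsilon> / (2 * (K + 1))"] e K0 by auto
    define \<eta> where "\<eta> = min (min \<eta>1 \<eta>2) (1 / (K + 1))"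
    have \<eta>pos: "\<eta> > 0" using \<eta>1 \<eta>2 K0 by (simp add: \<eta>_def)
    show ?thesis
    proof (intro exI[of _ \<eta>] conjI \<eta>pos allI impI)
      fix t t' assume tt: "0 \<le> t" "t \<le> t'" "t' \<le> T" "t' - t < \<eta>"
      define h where "h = t' - t"
      have h0: "h \<ge> 0" using tt by (simp add: h_def)
      have hK: "K * h \<le> 1"
      proof -
        have "h \<le> 1 / (K + 1)" using tt by (simp add: h_def \<eta>_def)
        then have "h * (K + 1) \<le> 1" using K0 by (simp add: field_simps)
        then show ?thesis using h0 by (simp add: algebra_simps)
      qed
      have N1: "N t' \<le> N t + h * k * N t + integral {t..t'} q + (\<epsilon>/2) * (h + integral {t..t'} rho)"
        using L tt by (auto simp: h_def \<eta>_def)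
      let ?e = "\<epsilon> / (2 * (K + 1))"
      have intSs: "S integrable_on {t..t'}" using integrable_subinterval_real[OF intS, of t t'] tt by auto
      have Sb: "\<bar>h * S t - integral {t..t'} S\<bar> \<le> h * ?e"
      proof -
        have bnd: "\<bar>S \<tau> - S t\<bar> \<le> ?e" if "\<tau> \<in> {t..t'}" for \<tau>
        proof -
          have "\<bar>\<tau> - t\<bar> < \<eta>2" using that tt by (auto simp: \<eta>_def)
          then have "dist (S \<tau>) (S t) < ?e" using U that tt by auto
          then show ?thesis by (simp add: dist_real_def)
        qed
        have bnd1: "S t - ?e \<le> S \<tau>" "S \<tau> \<le> S t + ?e" if "\<tau> \<in> {t..t'}" for \<tau>
          using bnd[OF that] by (auto simp: abs_le_iff)
        have lo: "integral {t..t'} (\<lambda>_. S t - ?e) \<le> integral {t..t'} S"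
          by (rule integral_le[OF integrable_const_ivl intSs bnd1(1)])
        have hi: "integral {t..t'} S \<le> integral {t..t'} (\<lambda>_. S t + ?e)"
          by (rule integral_le[OF intSs integrable_const_ivl bnd1(2)])
        show ?thesis using lo hi tt by (simp add: h_def abs_le_iff algebra_simps)
      qed
      have kb: "\<bar>k * (h * S t - integral {t..t'} S)\<bar> \<le> \<epsilon> / 2 * h"
      proof -
        have "\<bar>k * (h * S t - integral {t..t'} S)\<bar> = K * \<bar>h * S t - integral {t..t'} S\<bar>"
          by (simp add: K_def abs_mult)
        also have "\<dots> \<le> K * (h * ?e)" using Sb K0 by (rule mult_left_mono)
        also have "\<dots> \<le> \<epsilon> / 2 * h"
        proof -
          have "K * ?e \<le> \<epsilon> / 2" using K0 e by (simp add: field_simps)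
          then show ?thesis using h0 by (metis mult.assoc mult.commute mult_right_mono)
        qed
        finally show ?thesis .
      qed
      have rs: "integral {t..t'} rho \<ge> 0" using rho_sub tt by auto
      have D: "N t' - S t' \<le> (1 + h * k) * (N t - S t) + \<epsilon> * (h + integral {t..t'} rho)"
      proof -
        have "N t' - S t' = N t' - S t - (k * integral {t..t'} S + integral {t..t'} q)"
          using Sdiff[of t t'] tt by simp
        also have "\<dots> \<le> (1 + h * k) * (N t - S t) + k * (h * S t - integral {t..t'} S) + (\<epsilon>/2) * (h + integral {t..t'} rho)"
          using N1 by (simp add: algebra_simps)
        also have "\<dots> \<le> (1 + h * k) * (N t - S t) + \<epsilon> * (h + integral {t..t'} rho)"
        proof -
          have "k * (h * S t - integral {t..t'} S) \<le> \<epsilon> / 2 * h" using kb by (simp add: abs_le_iff)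
          moreover have "(\<epsilon>/2) * (h + integral {t..t'} rho) + \<epsilon> / 2 * h \<le> \<epsilon> * (h + integral {t..t'} rho)"
            using rs e by (simp add: algebra_simps)
          ultimately show ?thesis by linarith
        qed
        finally show ?thesis .
      qed
      have hk0: "1 + h * k \<ge> 0"
      proof -
        have "- (h * k) \<le> K * h" using h0 by (simp add: K_def abs_mult) (metis abs_ge_minus_self abs_mult mult.commute abs_of_nonneg)
        then show ?thesis using hK by linarith
      qed
      have "(1 + h * k) * (N t - S t) \<le> (1 + K * h) * P t"
      proof (cases "N t - S t \<ge> 0")
        case True
        then have "(1 + h * k) * (N t - S t) \<le> (1 + K * h) * (N t - S t)"
        proof (intro mult_right_mono)
          show "1 + h * k \<le> 1 + K * h" using h0 by (simp add: K_def mult.commute mult_left_mono)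
        qed (use True in simp)
        then show ?thesis using True by (simp add: P_def)
      next
        case False
        then have "(1 + h * k) * (N t - S t) \<le> 0" using hk0 by (simp add: mult_nonneg_nonpos)
        moreover have "(1 + K * h) * P t \<ge> 0" using K0 h0 by (simp add: P_def)
        ultimately show ?thesis by linarith
      qed
      then have "N t' - S t' \<le> (1 + K * h) * P t + \<epsilon> * (h + (R t' - R t))"
        using D Rdiff[OF tt(1-3)] by simp
      moreover have "(1 + K * h) * P t + \<epsilon> * (h + (R t' - R t)) \<ge> 0"
        using K0 h0 e rs Rdiff[OF tt(1-3)] by (simp add: P_def)
      ultimately show "P t' \<le> (1 + K * (t' - t)) * P t + \<epsilon> * ((t' - t) + (R t' - R t))"
        by (simp add: P_def h_def)
    qed
  qed
  have bound: "P T \<le> exp (K * T) * \<epsilon> * (T + R T)" if e: "\<epsilon> > 0" for \<epsilon>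
  proof -
    obtain \<eta> where \<eta>: "\<eta> > 0" and st: "\<forall>t t'. 0 \<le> t \<longrightarrow> t \<le> t' \<longrightarrow> t' \<le> T \<longrightarrow> t' - t < \<eta> \<longrightarrow>
       P t' \<le> (1 + K * (t' - t)) * P t + \<epsilon> * ((t' - t) + (R t' - R t))"
      using step[OF e] by blast
    define n :: nat where "n = nat \<lceil>T / \<eta>\<rceil> + 1"
    have npos: "n > 0" by (simp add: n_def)
    have "T / \<eta> < real n" unfolding n_def by linarith
    then have hn: "T / real n < \<eta>" using npos \<eta> by (simp add: field_simps)
    define h where "h = T / real n"
    have h0: "h \<ge> 0" using T by (simp add: h_def)
    have ind: "P (real j * h) \<le> exp (K * (real j * h)) * \<epsilon> * (real j * h + R (real j * h))" if "j \<le> n" for j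
      using that
    proof (induction j)
      case 0
      then show ?case using init by (simp add: P_def R_def)
    next
      case (Suc j)
      let ?t = "real j * h" and ?t' = "real (Suc j) * h"
      have tle: "?t' \<le> T"
      proof -
        have "?t' \<le> real n * h" using Suc.prems h0 by (intro mult_right_mono) auto
        also have "real n * h = T" using npos by (simp add: h_def)
        finally show ?thesis .
      qed
      have t0: "0 \<le> ?t" using h0 by simp
      have ttt: "?t \<le> ?t'" using h0 by (simp add: mult_right_mono)
      have dif: "?t' - ?t = h" by (simp add: algebra_simps)
      have IH: "P ?t \<le> exp (K * ?t) * \<epsilon> * (?t + R ?t)" using Suc by simp
      have s1: "P ?t' \<le> (1 + K * h) * P ?t + \<epsilon> * (h + (R ?t' - R ?t))"
      proof -
        have "?t' - ?t < \<eta>" using dif hn by (simp add: h_def)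
        from st[rule_format, OF t0 ttt tle this] show ?thesis unfolding dif .
      qed
      have Rt: "R ?t \<ge> 0" using R0 t0 ttt tle by auto
      have dR: "R ?t' - R ?t \<ge> 0" using Rdiff[OF t0 ttt tle] rho_sub[OF t0 ttt tle] by simp
      have e1: "1 + K * h \<le> exp (K * h)" by simp
      have Pnn: "P ?t \<ge> 0" by (simp add: P_def)
      have "(1 + K * h) * P ?t \<le> exp (K * h) * (exp (K * ?t) * \<epsilon> * (?t + R ?t))"
        using K0 h0 Pnn IH e1 by (intro mult_mono) auto
      also have "\<dots> = exp (K * ?t') * \<epsilon> * (?t + R ?t)"
        by (simp add: exp_add[symmetric] algebra_simps)
      finally have a1: "(1 + K * h) * P ?t \<le> exp (K * ?t') * \<epsilon> * (?t + R ?t)" .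
      have "\<epsilon> * (h + (R ?t' - R ?t)) \<le> exp (K * ?t') * (\<epsilon> * (h + (R ?t' - R ?t)))"
      proof -
        have "1 \<le> exp (K * ?t')" using K0 t0 ttt by simp
        moreover have "0 \<le> \<epsilon> * (h + (R ?t' - R ?t))" using e h0 dR by simp
        ultimately show ?thesis using mult_right_mono[of 1 "exp (K * ?t')" "\<epsilon> * (h + (R ?t' - R ?t))"] by simp
      qed
      then have a2: "\<epsilon> * (h + (R ?t' - R ?t)) \<le> exp (K * ?t') * \<epsilon> * (h + (R ?t' - R ?t))"
        by (simp add: mult.assoc)
      have "P ?t' \<le> exp (K * ?t') * \<epsilon> * (?t + R ?t) + exp (K * ?t') * \<epsilon> * (h + (R ?t' - R ?t))"
        using s1 a1 a2 by linarith
      also have "\<dots> = exp (K * ?t') * \<epsilon> * (?t' + R ?t')" by (simp add: algebra_simps)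
      finally show ?case .
    qed
    have "real n * h = T" using npos by (simp add: h_def)
    then show ?thesis using ind[of n] by simp
  qed
  have "P T \<le> 0"
  proof (rule ccontr)
    assume "\<not> P T \<le> 0"
    then have pos: "P T > 0" by simp
    define C where "C = exp (K * T) * (T + R T) + 1"
    have C1: "C \<ge> 1" using T R0[of T] by (simp add: C_def)
    have "P T \<le> exp (K * T) * (P T / (2 * C)) * (T + R T)" using bound[of "P T / (2 * C)"] pos C1 by simp
    also have "\<dots> = (P T / (2 * C)) * (C - 1)" by (simp add: C_def)
    also have "\<dots> < P T"
    proof -
      have "(P T / (2 * C)) * (C - 1) \<le> (P T / (2 * C)) * C" using pos C1 by (intro mult_left_mono) auto
      also have "\<dots> = P T / 2" using C1 by simp
      finally show ?thesis using pos by linarith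
    qed
    finally show False by simp
  qed
  then show ?thesis by (simp add: P_def)
qed

(* ---- Loc ---- *)
lemma ln_step:
  fixes v w :: "'a::real_inner"
  assumes q: "v \<bullet> w \<le> lam * (norm v)^2" and C: "norm w \<le> C * norm v"
    and h0: "h \<ge> 0" and hl: "h * \<bar>lam\<bar> \<le> 1/2"
  shows "norm (v + h *\<^sub>R w) \<le> (1 + h * lam + h^2 * C^2) * norm v"
proof -
  have hlam: "1 + h * lam \<ge> 1/2"
  proof -
    have "h * (- lam) \<le> h * \<bar>lam\<bar>" using h0 by (intro mult_left_mono) auto
    then have "- (h * lam) \<le> h * \<bar>lam\<bar>" by simp
    then show ?thesis using hl by linarith
  qed
  have C0: "(norm w)^2 \<le> C^2 * (norm v)^2"
    using C by (metis norm_ge_zero power_mono power_mult_distrib)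
  have "(norm (v + h *\<^sub>R w))^2 = (norm v)^2 + 2 * h * (v \<bullet> w) + h^2 * (norm w)^2"
  proof -
    have "(norm (v + h *\<^sub>R w))^2 = (v + h *\<^sub>R w) \<bullet> (v + h *\<^sub>R w)" by (simp add: power2_norm_eq_inner)
    also have "\<dots> = v \<bullet> v + 2 * h * (v \<bullet> w) + h^2 * (w \<bullet> w)"
      by (simp add: inner_add_left inner_add_right inner_commute[of w v] power2_eq_square algebra_simps)
    finally show ?thesis by (simp add: power2_norm_eq_inner)
  qed
  also have "\<dots> \<le> (norm v)^2 + 2 * h * (lam * (norm v)^2) + h^2 * (C^2 * (norm v)^2)"
    using q C0 h0 by (intro add_mono mult_left_mono) auto
  also have "\<dots> = (1 + 2 * h * lam + h^2 * C^2) * (norm v)^2" by (simp add: algebra_simps)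
  also have "\<dots> \<le> (1 + h * lam + h^2 * C^2)^2 * (norm v)^2"
  proof (rule mult_right_mono)
    have hl2: "1 + h * lam \<ge> 1/2" by (rule hlam)
    have "(1 + h * lam + h^2 * C^2)^2 = (1 + h * lam)^2 + 2 * (1 + h * lam) * (h^2 * C^2) + (h^2 * C^2)^2"
      by (simp add: power2_eq_square algebra_simps)
    moreover have "2 * (1 + h * lam) * (h^2 * C^2) \<ge> 1 * (h^2 * C^2)"
      using hl2 by (intro mult_right_mono) auto
    moreover have "(1 + h * lam)^2 = 1 + 2 * h * lam + (h * lam)^2" by (simp add: power2_eq_square algebra_simps)
    moreover have "(h * lam)^2 \<ge> 0" by simp
    moreover have "(h^2 * C^2)^2 \<ge> 0" by simp
    ultimately show "1 + 2 * h * lam + h^2 * C^2 \<le> (1 + h * lam + h^2 * C^2)^2"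
      by linarith
  qed simp
  also have "\<dots> = ((1 + h * lam + h^2 * C^2) * norm v)^2" by (simp add: power_mult_distrib)
  finally have sq: "(norm (v + h *\<^sub>R w))^2 \<le> ((1 + h * lam + h^2 * C^2) * norm v)^2" .
  from hlam have "(1 + h * lam + h^2 * C^2) * norm v \<ge> 0" by simp
  then show ?thesis using sq by (rule power2_le_imp_le[rotated])
qed

lemma deriv_lip_bound:
  assumes d: "(f has_derivative f') (at a)" and L: "C-lipschitz_on UNIV f"
  shows "norm (f' v) \<le> C * norm v"
proof (cases "v = 0")
  case True
  have "bounded_linear f'" using d by (simp add: has_derivative_at_alt)
  then show ?thesis using True by (simp add: linear_simps)
next
  case False
  have bl: "bounded_linear f'" and ap: "\<forall>e>0. \<exists>d>0. \<forall>y. norm(y - a) < d \<longrightarrow> norm (f y - f a - f'(y - a)) \<le> e * norm (y - a)"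
    using d by (auto simp: has_derivative_at_alt)
  have nv: "norm v > 0" using False by simp
  have key: "norm (f' v) \<le> (C + e) * norm v" if e: "e > 0" for e
  proof -
    obtain d where d: "d > 0" and dd: "\<forall>y. norm(y - a) < d \<longrightarrow> norm (f y - f a - f'(y - a)) \<le> e * norm (y - a)"
      using ap e by blast
    define t where "t = d / (2 * norm v)"
    have t0: "t > 0" using d nv by (simp add: t_def)
    have ny: "norm ((a + t *\<^sub>R v) - a) = t * norm v" using t0 by simp
    have "t * norm v < d" using d nv by (simp add: t_def)
    then have E: "norm (f (a + t *\<^sub>R v) - f a - f' (t *\<^sub>R v)) \<le> e * (t * norm v)"
      using dd[rule_format, of "a + t *\<^sub>R v"] ny t0 by (simp add: abs_of_pos)
    have Lp: "norm (f (a + t *\<^sub>R v) - f a) \<le> C * (t * norm v)"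
      using L unfolding lipschitz_on_def dist_norm by (metis UNIV_I ny)
    have "t * norm (f' v) = norm (f' (t *\<^sub>R v))"
      using t0 by (simp add: linear_simps(5)[OF bl] )
    also have "\<dots> \<le> norm (f (a + t *\<^sub>R v) - f a) + norm (f (a + t *\<^sub>R v) - f a - f' (t *\<^sub>R v))"
      by (metis norm_triangle_ineq4 add_diff_cancel diff_add_cancel norm_minus_commute norm_triangle_sub)
    also have "\<dots> \<le> t * ((C + e) * norm v)" using E Lp by (simp add: algebra_simps)
    finally show ?thesis using t0 by simp
  qed
  show ?thesis
  proof (rule ccontr)
    assume "\<not> ?thesis"
    then have g: "norm (f' v) - C * norm v > 0" by simp
    define e where "e = (norm (f' v) - C * norm v) / (2 * norm v)"
    have e0: "e > 0" using g nv by (simp add: e_def)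
    have "(C + e) * norm v = C * norm v + (norm (f' v) - C * norm v) / 2"
      using nv by (simp add: e_def field_simps)
    then have "norm (f' v) \<le> C * norm v + (norm (f' v) - C * norm v) / 2" using key[OF e0] by simp
    then show False using g by (simp add: field_simps)
  qed
qed

(* ---- Helpers ---- *)
lemma unif_lin:
  fixes w :: "'a::euclidean_space \<Rightarrow> 'b::real_normed_vector" and w' :: "'a \<Rightarrow> 'a \<Rightarrow>\<^sub>L 'b"
  assumes d: "\<forall>a. (w has_derivative blinfun_apply (w' a)) (at a)" and c: "continuous_on UNIV w'"
    and e: "\<epsilon> > 0"
  shows "\<exists>\<delta>>0. \<forall>a y. norm a \<le> M \<longrightarrow> norm (y - a) < \<delta> \<longrightarrow>
           norm (w y - w a - w' a (y - a)) \<le> \<epsilon> * norm (y - a)"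
proof -
  define K where "K = cball (0::'a) (\<bar>M\<bar> + 1)"
  have "uniformly_continuous_on K w'"
    by (rule compact_uniformly_continuous[OF continuous_on_subset[OF c]]) (auto simp: K_def)
  then obtain \<delta>0 where \<delta>0: "\<delta>0 > 0" and U: "\<forall>p\<in>K. \<forall>q\<in>K. dist q p < \<delta>0 \<longrightarrow> dist (w' q) (w' p) < \<epsilon>"
    using e unfolding uniformly_continuous_on_def by metis
  define \<delta> where "\<delta> = min \<delta>0 1"
  show ?thesis
  proof (intro exI[of _ \<delta>] conjI allI impI)
    show "\<delta> > 0" using \<delta>0 by (simp add: \<delta>_def)
    fix a y :: 'a assume a: "norm a \<le> M" and y: "norm (y - a) < \<delta>"
    have "norm (w y - w a - w' a (y - a)) \<le> norm (y - a) * \<epsilon>"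
    proof (rule differentiable_bound_linearization[where S="ball a \<delta>" and f'="\<lambda>z. blinfun_apply (w' z)"])
      fix t :: real assume t: "t \<in> {0..1}"
      have "norm (t *\<^sub>R (y - a)) \<le> norm (y - a)" using t by (auto simp: mult_left_le_one_le)
      then show "a + t *\<^sub>R (y - a) \<in> ball a \<delta>" using y by (simp add: dist_norm)
    next
      fix z assume "z \<in> ball a \<delta>"
      then show "(w has_derivative blinfun_apply (w' z)) (at z within ball a \<delta>)"
        using d has_derivative_at_withinI by blast
    next
      fix z assume z: "z \<in> ball a \<delta>"
      have aK: "a \<in> K" using a by (simp add: K_def)
      have zK: "z \<in> K"
      proof -
        have "norm z \<le> norm a + norm (z - a)" by (metis add.commute diff_add_cancel norm_triangle_ineq)
        moreover have "norm (z - a) < 1" using z by (simp add: dist_norm norm_minus_commute \<delta>_def)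
        ultimately show ?thesis using a by (simp add: K_def)
      qed
      have "dist z a < \<delta>0" using z by (simp add: dist_commute \<delta>_def)
      then have "dist (w' z) (w' a) < \<epsilon>" using U aK zK by blast
      then show "onorm (blinfun_apply (w' z) - blinfun_apply (w' a)) \<le> \<epsilon>"
        by (simp add: dist_norm norm_blinfun.rep_eq blinfun.diff_left[abs_def] fun_diff_def)
    next
      show "a \<in> ball a \<delta>" using \<open>\<delta> > 0\<close> by simp
    qed
    then show "norm (w y - w a - w' a (y - a)) \<le> \<epsilon> * norm (y - a)" by (simp add: mult.commute)
  qed
qed

lemma sol_int:
  fixes f y :: "real \<Rightarrow> 'a::banach"
  assumes s: "\<forall>t\<ge>0. (f has_integral (y t - y 0)) {0..t}" and T: "T \<ge> 0"
  shows "f integrable_on {0..T}"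
  using s T by (meson has_integral_integrable)

lemma sol_cont:
  fixes f y :: "real \<Rightarrow> 'a::banach"
  assumes s: "\<forall>t\<ge>0. (f has_integral (y t - y 0)) {0..t}" and T: "T \<ge> 0"
  shows "continuous_on {0..T} y"
proof -
  have "continuous_on {0..T} (\<lambda>t. y 0 + integral {0..t} f)"
    by (intro continuous_intros indefinite_integral_continuous_1 sol_int[OF s T])
  moreover have "y 0 + integral {0..t} f = y t" if "t \<in> {0..T}" for t
  proof -
    have "(f has_integral (y t - y 0)) {0..t}" using s that by auto
    then show ?thesis by (simp add: integral_unique)
  qed
  ultimately show ?thesis by (rule continuous_on_eq) 
qed

lemma sol_incr:
  fixes f y :: "real \<Rightarrow> 'a::banach"
  assumes s: "\<forall>t\<ge>0. (f has_integral (y t - y 0)) {0..t}" and tt: "0 \<le> t" "t \<le> t'"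
  shows "(f has_integral (y t' - y t)) {t..t'}"
proof -
  have h1: "(f has_integral (y t' - y 0)) {0..t'}" using s tt by auto
  have h2: "(f has_integral (y t - y 0)) {0..t}" using s tt by auto
  have i: "f integrable_on {0..t'}" using h1 by blast
  have "integral {t..t'} f = integral {0..t'} f - integral {0..t} f"
    by (rule integral_split0[OF i tt])
  also have "\<dots> = y t' - y t" using h1 h2 by (simp add: integral_unique)
  finally show ?thesis
    using integrable_subinterval_real[OF i, of t t'] tt by (metis atLeastatMost_subset_iff integrable_integral order_refl)
qed

(* ---- Main1 ---- *)
locale psetup =
  fixes Ar :: "real^('r::{finite,linorder})^('r::{finite,linorder})" and An :: "real^('c::{finite,linorder})^('c::{finite,linorder})"
    and Br :: "real^('m::finite)^('r::{finite,linorder})" and Bn :: "real^'m^('c::{finite,linorder})"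
    and fnl :: "(real^('r::{finite,linorder})) \<times> (real^('c::{finite,linorder})) \<Rightarrow> (real^('r::{finite,linorder})) \<times> (real^('c::{finite,linorder}))"
    and wnl :: "real^('r::{finite,linorder}) \<Rightarrow> (real^('r::{finite,linorder})) \<times> (real^('c::{finite,linorder}))"
    and wnl' :: "real^('r::{finite,linorder}) \<Rightarrow> ((real^('r::{finite,linorder})) \<Rightarrow>\<^sub>L ((real^('r::{finite,linorder})) \<times> (real^('c::{finite,linorder}))))"
    and g :: "real^('r::{finite,linorder}) \<Rightarrow> real^('r::{finite,linorder})"
    and Lf Lw Lr dbar :: real
    and u :: "real \<Rightarrow> real^'m" and d :: "real \<Rightarrow> (real^('r::{finite,linorder})) \<times> (real^('c::{finite,linorder}))"
    and x :: "real \<Rightarrow> (real^('r::{finite,linorder})) \<times> (real^('c::{finite,linorder}))" and zr :: "real \<Rightarrow> real^('r::{finite,linorder})"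
    and s \<delta> :: "real \<Rightarrow> real"
  assumes A_block_r: "real_block_diag Ar" and A_block_n: "real_block_diag An"
    and f_zero: "fnl 0 = 0"
    and f_lip: "Lf-lipschitz_on UNIV fnl"
    and w_deriv: "\<forall>xr. (wnl has_derivative blinfun_apply (wnl' xr)) (at xr)"
    and w_C1: "continuous_on UNIV wnl'"
    and w_lip: "Lw-lipschitz_on UNIV wnl"
    and W_inv: "\<forall>xr. fst ((xr, 0) + wnl xr) = xr"
    and W_invariant: "\<forall>xr. (Ar *v fst ((xr, 0) + wnl xr), An *v snd ((xr, 0) + wnl xr))
                          + fnl ((xr, 0) + wnl xr)
                        = (g xr, 0) + blinfun_apply (wnl' xr) (g xr)"
    and r_lip: "Lr-lipschitz_on UNIV (\<lambda>xr. fst (fnl ((xr, 0) + wnl xr)))"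
    and u_loc_int: "\<forall>T\<ge>0. u absolutely_integrable_on {0..T}"
    and d_bound: "\<forall>t\<ge>0. norm (d t) \<le> dbar"
    and x_sol: "\<forall>t\<ge>0. ((\<lambda>\<tau>. (Ar *v fst (x \<tau>), An *v snd (x \<tau>)) + fnl (x \<tau>)
                              + (Br *v u \<tau>, Bn *v u \<tau>) + d \<tau>)
                        has_integral (x t - x 0)) {0..t}"
    and z_sol: "\<forall>t\<ge>0. ((\<lambda>\<tau>. Ar *v zr \<tau> + fst (fnl ((zr \<tau>, 0) + wnl (zr \<tau>))) + Br *v u \<tau>)
                        has_integral (zr t - zr 0)) {0..t}"
    and s_sol: "\<forall>t\<ge>0. ((\<lambda>\<tau>. max_re_eig An * s \<tau> + (1 + Lw) * (Lf * s \<tau> + dbar)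
                              + norm (Bn *v u \<tau>) + Lw * norm (Br *v u \<tau>))
                        has_integral (s t - s 0)) {0..t}"
    and \<delta>_sol: "\<forall>t\<ge>0. ((\<lambda>\<tau>. (max_re_eig Ar + Lr) * \<delta> \<tau> + Lf * s \<tau> + dbar)
                        has_integral (\<delta> t - \<delta> 0)) {0..t}"
    and init_n: "norm (snd (x 0) - snd (wnl (fst (x 0)))) \<le> s 0"
    and init_r: "norm (fst (x 0) - zr 0) \<le> \<delta> 0"
begin

definition "F \<tau> = (Ar *v fst (x \<tau>), An *v snd (x \<tau>)) + fnl (x \<tau>) + (Br *v u \<tau>, Bn *v u \<tau>) + d \<tau>"
definition "xi t = snd (x t) - snd (wnl (fst (x t)))"
definition "rnl a = fst (fnl ((a, 0) + wnl a))"
definition "WW a = (a, snd (wnl a))"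

lemma Lf0: "Lf \<ge> 0" using f_lip by (simp add: lipschitz_on_def)
lemma Lw0: "Lw \<ge> 0" using w_lip by (simp add: lipschitz_on_def)
lemma Lr0: "Lr \<ge> 0" using r_lip by (simp add: lipschitz_on_def)

lemma fst_wnl: "fst (wnl a) = 0" using W_inv[rule_format, of a] by simp

lemma WW_eq: "(a, 0) + wnl a = WW a"
  using fst_wnl[of a] by (cases "wnl a") (simp add: WW_def)

lemma fst_wnl': "fst (wnl' a v) = 0"
proof -
  have d1: "((\<lambda>y. fst (wnl y)) has_derivative (\<lambda>v. fst (wnl' a v))) (at a)"
    using w_deriv by (auto intro!: derivative_eq_intros)
  have d2: "((\<lambda>y. fst (wnl y)) has_derivative (\<lambda>v. 0)) (at a)"
    by (simp add: fst_wnl)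
  show ?thesis using has_derivative_unique[OF d1 d2] by metis
qed

lemma wnl'_bound: "norm (wnl' a v) \<le> Lw * norm v"
  using deriv_lip_bound[OF w_deriv[rule_format] w_lip] .

lemma g_eq: "g a = Ar *v a + rnl a"
  using arg_cong[OF W_invariant[rule_format, of a], of fst] by (simp add: rnl_def fst_wnl' fst_wnl)

lemma inv_snd: "snd (wnl' a (g a)) = An *v snd (wnl a) + snd (fnl (WW a))"
  using arg_cong[OF W_invariant[rule_format, of a], of snd] by (simp add: WW_eq[symmetric])

lemma f_lip': "norm (fnl p - fnl q) \<le> Lf * norm (p - q)"
  using f_lip unfolding lipschitz_on_def dist_norm by blast

lemma f_bound: "norm (fnl p) \<le> Lf * norm p"
  using f_lip'[of p 0] by (simp add: f_zero)

lemma r_lip': "norm (rnl a - rnl b) \<le> Lr * norm (a - b)"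
  using r_lip by (simp add: lipschitz_on_def dist_norm rnl_def)

lemma w_lip': "norm (wnl a - wnl b) \<le> Lw * norm (a - b)"
  using w_lip by (simp add: lipschitz_on_def dist_norm)

lemma F_int: "T \<ge> 0 \<Longrightarrow> F integrable_on {0..T}"
  using sol_int[OF x_sol[folded F_def]] .

lemma x_cont: "T \<ge> 0 \<Longrightarrow> continuous_on {0..T} x"
  using sol_cont[OF x_sol[folded F_def]] .

lemma F_incr: "0 \<le> t \<Longrightarrow> t \<le> t' \<Longrightarrow> (F has_integral (x t' - x t)) {t..t'}"
  using sol_incr[OF x_sol[folded F_def]] .

lemma u_int: "T \<ge> 0 \<Longrightarrow> (\<lambda>\<tau>. norm (u \<tau>)) integrable_on {0..T}"
  using u_loc_int by (simp add: absolutely_integrable_on_def)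

end

(* ---- Main2 ---- *)
context psetup begin

lemma F_fst: "fst (F \<tau>) = Ar *v fst (x \<tau>) + fst (fnl (x \<tau>)) + Br *v u \<tau> + fst (d \<tau>)"
  by (simp add: F_def)
lemma F_snd: "snd (F \<tau>) = An *v snd (x \<tau>) + snd (fnl (x \<tau>)) + Bn *v u \<tau> + snd (d \<tau>)"
  by (simp add: F_def)

lemma rho_bound:
  assumes tau: "\<tau> \<ge> 0" and CAn: "\<And>v. norm (An *v v) \<le> CAn * norm v"
    and CAr: "\<And>v. norm (Ar *v v) \<le> CAr * norm v"
    and CAn0: "CAn \<ge> 0" and CAr0: "CAr \<ge> 0"
    and a_def: "a = fst (x t)"
  shows "norm (snd (F \<tau>) - snd (wnl' a (fst (F \<tau>))) - An *v (snd (x t) - snd (wnl a)))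
     \<le> (CAn + Lf + Lw * CAr + Lw * Lf) * norm (x \<tau> - x t) + (1 + Lw) * Lf * norm (snd (x t) - snd (wnl a))
       + ((1 + Lw) * dbar + norm (Bn *v u \<tau>) + Lw * norm (Br *v u \<tau>))"
proof -
  define W where "W = WW a"
  define \<Delta> where "\<Delta> = x \<tau> - x t"
  define df where "df = fnl (x \<tau>) - fnl W"
  define N where "N = norm (snd (x t) - snd (wnl a))"
  define v where "v = Ar *v fst \<Delta> + fst df + Br *v u \<tau> + fst (d \<tau>)"
  have xtW: "x t - W = (0, snd (x t) - snd (wnl a))"
    unfolding W_def WW_def a_def by (cases "x t") simp
  have nxtW: "norm (x t - W) = N" unfolding xtW N_def by (simp add: norm_Pair)
  have ga: "g a = Ar *v a + fst (fnl W)"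
    unfolding g_eq rnl_def W_def WW_eq ..
  have fF: "fst (F \<tau>) = g a + v"
  proof -
    have "fst (x \<tau>) = a + fst \<Delta>" unfolding \<Delta>_def a_def by simp
    then show ?thesis unfolding F_fst ga v_def df_def
      by (simp add: matrix_vector_right_distrib algebra_simps)
  qed
  have Lv: "snd (wnl' a (fst (F \<tau>))) = An *v snd (wnl a) + snd (fnl W) + snd (wnl' a v)"
    unfolding fF blinfun.add_right W_def using inv_snd[of a] by simp
  have eq: "snd (F \<tau>) - snd (wnl' a (fst (F \<tau>))) - An *v (snd (x t) - snd (wnl a))
      = An *v snd \<Delta> + snd df + Bn *v u \<tau> + snd (d \<tau>) - snd (wnl' a v)"
    unfolding Lv F_snd \<Delta>_def df_def
    by (simp add: matrix_vector_mult_diff_distrib algebra_simps)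
  have nD: "norm (An *v snd \<Delta>) \<le> CAn * norm \<Delta>"
  proof -
    have "norm (snd \<Delta>) \<le> norm \<Delta>" by (metis norm_snd_le prod.collapse)
    then have "CAn * norm (snd \<Delta>) \<le> CAn * norm \<Delta>" using CAn0 by (rule mult_left_mono)
    then show ?thesis using CAn[of "snd \<Delta>"] by linarith
  qed
  have nfD: "norm (Ar *v fst \<Delta>) \<le> CAr * norm \<Delta>"
  proof -
    have "norm (fst \<Delta>) \<le> norm \<Delta>" by (metis norm_fst_le prod.collapse)
    then have "CAr * norm (fst \<Delta>) \<le> CAr * norm \<Delta>" using CAr0 by (rule mult_left_mono)
    then show ?thesis using CAr[of "fst \<Delta>"] by linarith
  qed
  have ndf: "norm df \<le> Lf * norm \<Delta> + Lf * N"
  proof -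
    have "norm df \<le> Lf * norm (x \<tau> - W)" unfolding df_def by (rule f_lip')
    also have "norm (x \<tau> - W) \<le> norm \<Delta> + N"
      unfolding \<Delta>_def nxtW[symmetric] by (metis diff_add_cancel norm_triangle_ineq add_diff_eq diff_diff_eq2)
    then have "Lf * norm (x \<tau> - W) \<le> Lf * (norm \<Delta> + N)" using Lf0 by (rule mult_left_mono)
    finally show ?thesis by (simp add: algebra_simps)
  qed
  have nsdf: "norm (snd df) \<le> Lf * norm \<Delta> + Lf * N"
    using ndf norm_snd_le[of "snd df" "fst df"] by simp
  have nfdf: "norm (fst df) \<le> Lf * norm \<Delta> + Lf * N"
    using ndf norm_fst_le[of "fst df" "snd df"] by simp
  have nd: "norm (d \<tau>) \<le> dbar" using d_bound tau by auto
  have nsd: "norm (snd (d \<tau>)) \<le> dbar" using nd norm_snd_le[of "snd (d \<tau>)" "fst (d \<tau>)"] by simp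
  have nfd: "norm (fst (d \<tau>)) \<le> dbar" using nd norm_fst_le[of "fst (d \<tau>)" "snd (d \<tau>)"] by simp
  have nv: "norm v \<le> CAr * norm \<Delta> + (Lf * norm \<Delta> + Lf * N) + norm (Br *v u \<tau>) + dbar"
  proof -
    have "norm v \<le> norm (Ar *v fst \<Delta>) + norm (fst df) + norm (Br *v u \<tau>) + norm (fst (d \<tau>))"
      unfolding v_def by (intro order_trans[OF norm_triangle_ineq] add_mono order_refl)
    then show ?thesis using nfD nfdf nfd by linarith
  qed
  have nLv: "norm (snd (wnl' a v)) \<le> Lw * (CAr * norm \<Delta> + (Lf * norm \<Delta> + Lf * N) + norm (Br *v u \<tau>) + dbar)"
  proof -
    have "norm (snd (wnl' a v)) \<le> norm (wnl' a v)"
      using norm_snd_le[of "snd (wnl' a v)" "fst (wnl' a v)"] by simp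
    also have "\<dots> \<le> Lw * norm v" by (rule wnl'_bound)
    also have "\<dots> \<le> Lw * (CAr * norm \<Delta> + (Lf * norm \<Delta> + Lf * N) + norm (Br *v u \<tau>) + dbar)"
      using nv Lw0 by (rule mult_left_mono)
    finally show ?thesis .
  qed
  have "norm (An *v snd \<Delta> + snd df + Bn *v u \<tau> + snd (d \<tau>) - snd (wnl' a v))
     \<le> CAn * norm \<Delta> + (Lf * norm \<Delta> + Lf * N) + norm (Bn *v u \<tau>) + dbar
        + Lw * (CAr * norm \<Delta> + (Lf * norm \<Delta> + Lf * N) + norm (Br *v u \<tau>) + dbar)"
  proof -
    have "norm (An *v snd \<Delta> + snd df + Bn *v u \<tau> + snd (d \<tau>) - snd (wnl' a v))
      \<le> norm (An *v snd \<Delta> + snd df + Bn *v u \<tau> + snd (d \<tau>)) + norm (snd (wnl' a v))"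
      by (rule norm_triangle_ineq4)
    also have "norm (An *v snd \<Delta> + snd df + Bn *v u \<tau> + snd (d \<tau>))
      \<le> norm (An *v snd \<Delta>) + norm (snd df) + norm (Bn *v u \<tau>) + norm (snd (d \<tau>))"
      by (intro order_trans[OF norm_triangle_ineq] add_mono order_refl)
    finally show ?thesis using nD nsdf nsd nLv by linarith
  qed
  also have "\<dots> = (CAn + Lf + Lw * CAr + Lw * Lf) * norm \<Delta> + (1 + Lw) * Lf * N
       + ((1 + Lw) * dbar + norm (Bn *v u \<tau>) + Lw * norm (Br *v u \<tau>))"
    by (simp add: algebra_simps)
  finally show ?thesis unfolding eq \<Delta>_def N_def .
qed


definition "k1 = max_re_eig An + (1 + Lw) * Lf"
definition "q1 \<tau> = (1 + Lw) * dbar + norm (Bn *v u \<tau>) + Lw * norm (Br *v u \<tau>)"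

lemma s_sol': "\<forall>t\<ge>0. ((\<lambda>\<tau>. k1 * s \<tau> + q1 \<tau>) has_integral (s t - s 0)) {0..t}"
proof -
  have "(\<lambda>\<tau>. k1 * s \<tau> + q1 \<tau>) = (\<lambda>\<tau>. max_re_eig An * s \<tau> + (1 + Lw) * (Lf * s \<tau> + dbar)
                              + norm (Bn *v u \<tau>) + Lw * norm (Br *v u \<tau>))"
    by (rule ext) (simp add: k1_def q1_def algebra_simps)
  then show ?thesis using s_sol by simp
qed

lemma s_cont: "T \<ge> 0 \<Longrightarrow> continuous_on {0..T} s"
  using sol_cont[OF s_sol'] .

lemma q1_int: assumes T: "T \<ge> 0" shows "q1 integrable_on {0..T}"
proof -
  have "(\<lambda>\<tau>. k1 * s \<tau> + q1 \<tau>) integrable_on {0..T}" using sol_int[OF s_sol' T] .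
  moreover have "(\<lambda>\<tau>. k1 * s \<tau>) integrable_on {0..T}"
    using integrable_continuous_interval[OF s_cont[OF T]] by (rule integrable_cmul[where 'b=real, simplified])
  ultimately have "(\<lambda>\<tau>. (k1 * s \<tau> + q1 \<tau>) - k1 * s \<tau>) integrable_on {0..T}" by (rule integrable_diff)
  then show ?thesis by simp
qed

lemma mat_bound: "\<exists>C\<ge>0. \<forall>v. norm (M *v v) \<le> C * norm v" for M :: "real^'a::finite^'b::finite"
  using bounded_linear.nonneg_bounded[OF matrix_vector_mul_bounded_linear[of M]] by (metis mult.commute)

lemma F_bound:
  assumes tau: "\<tau> \<ge> 0" and Mx: "norm (x \<tau>) \<le> Mx"
    and CAn: "\<And>v. norm (An *v v) \<le> CAn * norm v" and CAr: "\<And>v. norm (Ar *v v) \<le> CAr * norm v"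
    and CBn: "\<And>v. norm (Bn *v v) \<le> CBn * norm v" and CBr: "\<And>v. norm (Br *v v) \<le> CBr * norm v"
    and C0: "CAn \<ge> 0" "CAr \<ge> 0"
  shows "norm (F \<tau>) \<le> (CAr + CAn + Lf) * Mx + dbar + (CBr + CBn) * norm (u \<tau>)"
proof -
  have n1: "norm (Ar *v fst (x \<tau>), An *v snd (x \<tau>)) \<le> (CAr + CAn) * Mx"
  proof -
    have "norm (Ar *v fst (x \<tau>), An *v snd (x \<tau>)) \<le> norm (Ar *v fst (x \<tau>)) + norm (An *v snd (x \<tau>))"
      by (rule norm_Pair_le)
    also have "\<dots> \<le> CAr * norm (fst (x \<tau>)) + CAn * norm (snd (x \<tau>))" using CAr CAn by (rule add_mono)
    also have "\<dots> \<le> CAr * Mx + CAn * Mx"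
    proof (intro add_mono mult_left_mono)
      show "norm (fst (x \<tau>)) \<le> Mx" using Mx norm_fst_le[of "fst (x \<tau>)" "snd (x \<tau>)"] by simp
      show "norm (snd (x \<tau>)) \<le> Mx" using Mx norm_snd_le[of "snd (x \<tau>)" "fst (x \<tau>)"] by simp
    qed (use C0 in auto)
    finally show ?thesis by (simp add: algebra_simps)
  qed
  have n2: "norm (fnl (x \<tau>)) \<le> Lf * Mx" using f_bound[of "x \<tau>"] Mx Lf0 by (meson mult_left_mono order_trans)
  have n3: "norm (Br *v u \<tau>, Bn *v u \<tau>) \<le> (CBr + CBn) * norm (u \<tau>)"
    using norm_Pair_le[of "Br *v u \<tau>" "Bn *v u \<tau>"] CBr[of "u \<tau>"] CBn[of "u \<tau>"] by (simp add: algebra_simps)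
  have n4: "norm (d \<tau>) \<le> dbar" using d_bound tau by auto
  have "norm (F \<tau>) \<le> norm (Ar *v fst (x \<tau>), An *v snd (x \<tau>)) + norm (fnl (x \<tau>)) + norm (Br *v u \<tau>, Bn *v u \<tau>) + norm (d \<tau>)"
    unfolding F_def by (intro order_trans[OF norm_triangle_ineq] add_mono order_refl)
  also have "\<dots> \<le> (CAr + CAn) * Mx + Lf * Mx + (CBr + CBn) * norm (u \<tau>) + dbar"
    using n1 n2 n3 n4 by linarith
  finally show ?thesis by (simp add: algebra_simps)
qed

end

(* ---- Main3 ---- *)
context psetup begin

lemma xi_local:
  assumes T: "T \<ge> 0" and e: "\<epsilon> > 0"
  shows "\<exists>\<eta>>0. \<forall>t t'. 0 \<le> t \<longrightarrow> t \<le> t' \<longrightarrow> t' \<le> T \<longrightarrow> t' - t < \<eta> \<longrightarrow>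
     norm (xi t') \<le> norm (xi t) + (t' - t) * k1 * norm (xi t) + integral {t..t'} q1
        + \<epsilon> * ((t' - t) + integral {t..t'} (\<lambda>\<tau>. norm (u \<tau>)))"
proof -
  obtain CAn where CAn0: "CAn \<ge> 0" and CAn: "\<And>v. norm (An *v v) \<le> CAn * norm v" using mat_bound by blast
  obtain CAr where CAr0: "CAr \<ge> 0" and CAr: "\<And>v. norm (Ar *v v) \<le> CAr * norm v" using mat_bound by blast
  obtain CBn where CBn0: "CBn \<ge> 0" and CBn: "\<And>v. norm (Bn *v v) \<le> CBn * norm v" using mat_bound by blast
  obtain CBr where CBr0: "CBr \<ge> 0" and CBr: "\<And>v. norm (Br *v v) \<le> CBr * norm v" using mat_bound by blast
  have "bounded (x ` {0..T})"
    by (intro compact_imp_bounded compact_continuous_image x_cont[OF T]) simp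
  then obtain Mx where Mx0: "Mx > 0" and Mx: "\<And>t. t \<in> {0..T} \<Longrightarrow> norm (x t) \<le> Mx"
    unfolding bounded_pos by auto
  define Mxi where "Mxi = Mx + norm (wnl 0) + Lw * Mx"
  have Mxi: "norm (xi t) \<le> Mxi" if "t \<in> {0..T}" for t
  proof -
    have a: "norm (fst (x t)) \<le> Mx" using Mx[OF that] norm_fst_le[of "fst (x t)" "snd (x t)"] by simp
    have "norm (wnl (fst (x t))) \<le> norm (wnl 0) + Lw * Mx"
    proof -
      have "norm (wnl (fst (x t))) \<le> norm (wnl 0) + norm (wnl (fst (x t)) - wnl 0)" by (rule norm_triangle_sub)
      moreover have "norm (wnl (fst (x t)) - wnl 0) \<le> Lw * norm (fst (x t))" using w_lip'[of "fst (x t)" 0] by simp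
      moreover have "Lw * norm (fst (x t)) \<le> Lw * Mx" using a Lw0 by (rule mult_left_mono)
      ultimately show ?thesis by linarith
    qed
    moreover have "norm (snd (wnl (fst (x t)))) \<le> norm (wnl (fst (x t)))"
      using norm_snd_le[of "snd (wnl (fst (x t)))" "fst (wnl (fst (x t)))"] by simp
    moreover have "norm (snd (x t)) \<le> Mx" using Mx[OF that] norm_snd_le[of "snd (x t)" "fst (x t)"] by simp
    moreover have "norm (xi t) \<le> norm (snd (x t)) + norm (snd (wnl (fst (x t))))"
      unfolding xi_def by (rule norm_triangle_ineq4)
    ultimately show ?thesis unfolding Mxi_def by linarith
  qed
  have "norm (xi 0) \<le> Mxi" using Mxi[of 0] T by simp
  then have Mxi0: "Mxi \<ge> 0" using norm_ge_zero[of "xi 0"] by linarith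
  define lam where "lam = max_re_eig An"
  have quad: "\<And>v. v \<bullet> (An *v v) \<le> lam * (norm v)^2"
    unfolding lam_def by (rule quad_form_le[OF A_block_n diag_le_max_re_eig[OF A_block_n]])
  define c1 where "c1 = CAn + Lf + Lw * CAr + Lw * Lf"
  have c10: "c1 \<ge> 0" using CAn0 CAr0 Lf0 Lw0 by (simp add: c1_def)
  define M1 where "M1 = (CAr + CAn + Lf) * Mx + dbar"
  define CB where "CB = CBr + CBn"
  have CB0: "CB \<ge> 0" using CBr0 CBn0 by (simp add: CB_def)
  have dbar0: "dbar \<ge> 0" using d_bound norm_ge_zero by (meson order_trans order_refl)
  have M10: "M1 \<ge> 0" using CAr0 CAn0 Lf0 Mx0 dbar0 by (simp add: M1_def)
  define \<epsilon>1 where "\<epsilon>1 = \<epsilon> / (3 * (c1 + 1))"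
  define \<epsilon>2 where "\<epsilon>2 = \<epsilon> / (3 * (M1 + CB + 1))"
  have \<epsilon>1: "\<epsilon>1 > 0" using e c10 by (simp add: \<epsilon>1_def)
  have \<epsilon>2: "\<epsilon>2 > 0" using e M10 CB0 by (simp add: \<epsilon>2_def)
  obtain \<delta>w where \<delta>w: "\<delta>w > 0" and lin: "\<forall>a y. norm a \<le> Mx \<longrightarrow> norm (y - a) < \<delta>w \<longrightarrow>
           norm (wnl y - wnl a - wnl' a (y - a)) \<le> \<epsilon>2 * norm (y - a)"
    using unif_lin[OF w_deriv w_C1 \<epsilon>2, of Mx] by blast
  obtain \<eta>x where \<eta>x: "\<eta>x > 0" and ux: "\<forall>t\<in>{0..T}. \<forall>t'\<in>{0..T}. \<bar>t' - t\<bar> < \<eta>x \<longrightarrow> dist (x t') (x t) < min \<epsilon>1 \<delta>w"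
    using uc_interval[OF x_cont[OF T], of "min \<epsilon>1 \<delta>w"] \<epsilon>1 \<delta>w by auto
  define \<eta> where "\<eta> = min (min \<eta>x (1 / (2 * \<bar>lam\<bar> + 1))) (\<epsilon> / (3 * (CAn^2 * Mxi + 1)))"
  have "CAn^2 * Mxi \<ge> 0" using Mxi0 by simp
  then have dpos: "0 < CAn^2 * Mxi + 1" by linarith
  have "0 < 2 * \<bar>lam\<bar> + 1" by simp
  then have \<eta>0: "\<eta> > 0" using \<eta>x e dpos unfolding \<eta>_def by (simp del: divide_const_simps)
  show ?thesis
  proof (intro exI[of _ \<eta>] conjI \<eta>0 allI impI)
    fix t t' assume t0: "0 \<le> t" and tt: "t \<le> t'" and t'T: "t' \<le> T" and th: "t' - t < \<eta>"
    define h where "h = t' - t"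
    have h0: "h \<ge> 0" using tt by (simp add: h_def)
    have tT: "t \<in> {0..T}" "t' \<in> {0..T}" using t0 tt t'T by auto
    define a where "a = fst (x t)"
    define y where "y = fst (x t')"
    define Ix where "Ix = x t' - x t"
    define N where "N = norm (xi t)"
    have FI: "(F has_integral Ix) {t..t'}" unfolding Ix_def by (rule F_incr[OF t0 tt])
    have bl2: "bounded_linear (\<lambda>z. snd (wnl' a (fst z)))"
      by (intro bounded_linear_compose[OF bounded_linear_snd] bounded_linear_compose[OF blinfun.bounded_linear_right] bounded_linear_fst)
    define G where "G \<tau> = snd (F \<tau>) - snd (wnl' a (fst (F \<tau>)))" for \<tau>
    have GI: "(G has_integral (snd Ix - snd (wnl' a (fst Ix)))) {t..t'}"
      unfolding G_def using has_integral_linear[OF FI bounded_linear_snd] has_integral_linear[OF FI bl2]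
      by (intro has_integral_diff) (auto simp: o_def)
    define \<rho> where "\<rho> \<tau> = G \<tau> - An *v xi t" for \<tau>
    have contt: "Henstock_Kurzweil_Integration.content {t..t'} = h" using tt by (simp add: h_def)
    have \<rho>I: "(\<rho> has_integral (snd Ix - snd (wnl' a (fst Ix)) - h *\<^sub>R (An *v xi t))) {t..t'}"
      unfolding \<rho>_def using has_integral_diff[OF GI has_integral_const_real[of "An *v xi t" t t']] contt by simp
    define E where "E = wnl y - wnl a - wnl' a (y - a)"
    have fIx: "fst Ix = y - a" by (simp add: Ix_def y_def a_def)
    have decomp: "xi t' = (xi t + h *\<^sub>R (An *v xi t)) + integral {t..t'} \<rho> - snd E"
      using integral_unique[OF \<rho>I] unfolding E_def fIx xi_def
      by (simp add: Ix_def a_def y_def blinfun.diff_right algebra_simps)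
    \<comment> \<open>part (1)\<close>
    have hl: "h * \<bar>lam\<bar> \<le> 1/2"
    proof -
      have "h < 1 / (2 * \<bar>lam\<bar> + 1)" using th by (simp add: h_def \<eta>_def)
      then have "h * (2 * \<bar>lam\<bar> + 1) < 1" by (simp add: field_simps)
      then show ?thesis using h0 by (simp add: algebra_simps)
    qed
    have P1: "norm (xi t + h *\<^sub>R (An *v xi t)) \<le> (1 + h * lam + h^2 * CAn^2) * N"
      unfolding N_def by (rule ln_step[OF quad CAn h0 hl])
    have hsq: "h^2 * CAn^2 * N \<le> \<epsilon> / 3 * h"
    proof -
      have "h \<le> \<epsilon> / (3 * (CAn^2 * Mxi + 1))" using th by (simp add: h_def \<eta>_def)
      moreover have D3: "0 < 3 * (CAn^2 * Mxi + 1)" using dpos by simp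
      ultimately have "h * (3 * (CAn^2 * Mxi + 1)) \<le> \<epsilon>" using pos_le_divide_eq[OF D3] by blast
      moreover have "h * (3 * (CAn^2 * Mxi + 1)) = 3 * (h * (CAn^2 * Mxi)) + 3 * h" by (simp add: algebra_simps)
      ultimately have "h * (CAn^2 * Mxi) \<le> \<epsilon> / 3" using h0 by linarith
      moreover have "h * (CAn^2 * N) \<le> h * (CAn^2 * Mxi)"
        using Mxi[OF tT(1)] h0 by (intro mult_left_mono) (auto simp: N_def)
      ultimately have "h * (CAn^2 * N) \<le> \<epsilon> / 3" by linarith
      then have "h * (h * (CAn^2 * N)) \<le> h * (\<epsilon> / 3)" using h0 by (rule mult_left_mono)
      then show ?thesis by (simp add: power2_eq_square algebra_simps)
    qed
    \<comment> \<open>part (2)\<close>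
    have q1i: "q1 integrable_on {t..t'}"
      using integrable_subinterval_real[OF q1_int[OF T], of t t'] t0 t'T by auto
    define gf where "gf \<tau> = (c1 * \<epsilon>1 + (1 + Lw) * Lf * N) + q1 \<tau>" for \<tau>
    have gfi: "gf integrable_on {t..t'}" unfolding gf_def by (intro integrable_add integrable_const_ivl q1i)
    have gfint: "integral {t..t'} gf = h * (c1 * \<epsilon>1 + (1 + Lw) * Lf * N) + integral {t..t'} q1"
      unfolding gf_def using integral_add[OF integrable_const_ivl q1i] contt by simp
    have \<rho>b: "norm (\<rho> \<tau>) \<le> gf \<tau>" if \<tau>: "\<tau> \<in> {t..t'}" for \<tau>
    proof -
      have \<tau>T: "\<tau> \<in> {0..T}" using \<tau> t0 t'T by auto
      have "\<bar>\<tau> - t\<bar> < \<eta>x" using \<tau> th by (auto simp: \<eta>_def)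
      then have "dist (x \<tau>) (x t) < min \<epsilon>1 \<delta>w" using ux \<tau>T tT by blast
      then have nx: "norm (x \<tau> - x t) \<le> \<epsilon>1" by (simp add: dist_norm)
      have "norm (\<rho> \<tau>) \<le> c1 * norm (x \<tau> - x t) + (1 + Lw) * Lf * N + q1 \<tau>"
        using rho_bound[OF _ CAn CAr CAn0 CAr0, of \<tau> a t] \<tau>T unfolding \<rho>_def G_def xi_def N_def q1_def c1_def a_def
        by simp
      also have "\<dots> \<le> c1 * \<epsilon>1 + (1 + Lw) * Lf * N + q1 \<tau>"
        using nx c10 by (simp add: mult_left_mono)
      finally show ?thesis by (simp add: gf_def)
    qed
    have P2: "norm (integral {t..t'} \<rho>) \<le> h * (c1 * \<epsilon>1 + (1 + Lw) * Lf * N) + integral {t..t'} q1"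
      using integral_norm_bound_integral[OF has_integral_integrable[OF \<rho>I] gfi \<rho>b] gfint by simp
    \<comment> \<open>part (3)\<close>
    have nya: "norm (y - a) \<le> norm Ix" unfolding fIx[symmetric] by (metis norm_fst_le prod.collapse)
    have "\<bar>t' - t\<bar> < \<eta>x" using th tt by (auto simp: \<eta>_def)
    then have "dist (x t') (x t) < min \<epsilon>1 \<delta>w" using ux tT by blast
    then have "norm Ix < \<delta>w" by (simp add: dist_norm Ix_def)
    then have ya: "norm (y - a) < \<delta>w" using nya by linarith
    have aM: "norm a \<le> Mx" using Mx[OF tT(1)] norm_fst_le[of "fst (x t)" "snd (x t)"] by (simp add: a_def)
    have nE: "norm E \<le> \<epsilon>2 * norm (y - a)" unfolding E_def using lin aM ya by blast
    have ui: "(\<lambda>\<tau>. norm (u \<tau>)) integrable_on {t..t'}"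
      using integrable_subinterval_real[OF u_int[OF T], of t t'] t0 t'T by auto
    have Fb: "norm (F \<tau>) \<le> M1 + CB * norm (u \<tau>)" if "\<tau> \<in> {t..t'}" for \<tau>
      using F_bound[OF _ Mx CAn CAr CBn CBr CAn0 CAr0, of \<tau>] that t0 t'T by (auto simp: M1_def CB_def)
    have bi: "(\<lambda>\<tau>. M1 + CB * norm (u \<tau>)) integrable_on {t..t'}"
      by (intro integrable_add integrable_const_ivl integrable_cmul[where 'b=real, simplified] ui)
    have "norm Ix \<le> integral {t..t'} (\<lambda>\<tau>. M1 + CB * norm (u \<tau>))"
      using integral_norm_bound_integral[OF has_integral_integrable[OF FI] bi Fb] integral_unique[OF FI] by simp
    also have "\<dots> = h * M1 + CB * integral {t..t'} (\<lambda>\<tau>. norm (u \<tau>))"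
      using integral_add[OF integrable_const_ivl integrable_cmul[where 'b=real, simplified, OF ui]] contt
      by (simp add: integral_mult_right)
    finally have nIx: "norm Ix \<le> h * M1 + CB * integral {t..t'} (\<lambda>\<tau>. norm (u \<tau>))" .
    have ui0: "integral {t..t'} (\<lambda>\<tau>. norm (u \<tau>)) \<ge> 0" by (rule integral_nonneg[OF ui]) simp
    have P3: "norm (snd E) \<le> \<epsilon>2 * (h * M1 + CB * integral {t..t'} (\<lambda>\<tau>. norm (u \<tau>)))"
    proof -
      have "norm (snd E) \<le> norm E" using norm_snd_le[of "snd E" "fst E"] by simp
      also have "\<dots> \<le> \<epsilon>2 * norm (y - a)" by (rule nE)
      also have "\<dots> \<le> \<epsilon>2 * (h * M1 + CB * integral {t..t'} (\<lambda>\<tau>. norm (u \<tau>)))"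
        using nya nIx \<epsilon>2 by (intro mult_left_mono) auto
      finally show ?thesis .
    qed
    \<comment> \<open>combine\<close>
    define U where "U = integral {t..t'} (\<lambda>\<tau>. norm (u \<tau>))"
    have e1c: "h * (c1 * \<epsilon>1) \<le> \<epsilon> / 3 * h"
    proof -
      have "c1 * \<epsilon>1 \<le> \<epsilon> / 3" using c10 e by (simp add: \<epsilon>1_def field_simps)
      then show ?thesis using h0 by (metis mult.commute mult_left_mono)
    qed
    have e2c: "\<epsilon>2 * (h * M1 + CB * U) \<le> \<epsilon> / 3 * h + \<epsilon> * U"
    proof -
      have a1: "\<epsilon>2 * M1 \<le> \<epsilon> / 3" using M10 CB0 e by (simp add: \<epsilon>2_def field_simps)
      have a2: "\<epsilon>2 * CB \<le> \<epsilon>" using M10 CB0 e by (simp add: \<epsilon>2_def field_simps)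
      have "\<epsilon>2 * (h * M1) \<le> \<epsilon> / 3 * h" using a1 h0 by (metis mult.assoc mult.commute mult_left_mono)
      moreover have "\<epsilon>2 * (CB * U) \<le> \<epsilon> * U" using a2 ui0 by (metis U_def mult.assoc mult_right_mono)
      ultimately show ?thesis by (simp add: distrib_left)
    qed
    have "norm (xi t') \<le> norm (xi t + h *\<^sub>R (An *v xi t)) + norm (integral {t..t'} \<rho>) + norm (snd E)"
      unfolding decomp by (intro order_trans[OF norm_triangle_ineq4] add_mono norm_triangle_ineq order_refl)
    also have "\<dots> \<le> (1 + h * lam + h^2 * CAn^2) * N + (h * (c1 * \<epsilon>1 + (1 + Lw) * Lf * N) + integral {t..t'} q1)
                 + \<epsilon>2 * (h * M1 + CB * U)"
      using P1 P2 P3 unfolding U_def by linarith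
    also have "\<dots> = N + h * k1 * N + integral {t..t'} q1 + (h^2 * CAn^2 * N + h * (c1 * \<epsilon>1) + \<epsilon>2 * (h * M1 + CB * U))"
      by (simp add: k1_def lam_def algebra_simps)
    also have "\<dots> \<le> N + h * k1 * N + integral {t..t'} q1 + \<epsilon> * (h + U)"
      using hsq e1c e2c by (simp add: algebra_simps)
    finally show "norm (xi t') \<le> norm (xi t) + (t' - t) * k1 * norm (xi t) + integral {t..t'} q1
        + \<epsilon> * ((t' - t) + integral {t..t'} (\<lambda>\<tau>. norm (u \<tau>)))"
      by (simp add: N_def h_def U_def)
  qed
qed

end

(* ---- Main4 ---- *)
context psetup begin

lemma xi_bound: assumes T: "T \<ge> 0" shows "norm (xi T) \<le> s T"
proof (rule gc[where N="\<lambda>t. norm (xi t)" and S=s and k=k1 and q=q1 and rho="\<lambda>\<tau>. norm (u \<tau>)", OF T])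
  show "norm (xi 0) \<le> s 0" using init_n by (simp add: xi_def)
  show "continuous_on {0..T} s" using s_cont[OF T] .
  show "((\<lambda>\<tau>. k1 * s \<tau> + q1 \<tau>) has_integral (s t - s 0)) {0..t}" if "t \<in> {0..T}" for t
    using s_sol' that by auto
  show "(\<lambda>\<tau>. norm (u \<tau>)) integrable_on {0..T}" using u_int[OF T] .
  show "\<And>\<tau>. 0 \<le> norm (u \<tau>)" by simp
  show "\<exists>\<eta>>0. \<forall>t t'. 0 \<le> t \<longrightarrow> t \<le> t' \<longrightarrow> t' \<le> T \<longrightarrow> t' - t < \<eta> \<longrightarrow>
        norm (xi t') \<le> norm (xi t) + (t' - t) * k1 * norm (xi t) + integral {t..t'} q1 + \<epsilon> * ((t' - t) + integral {t..t'} (\<lambda>\<tau>. norm (u \<tau>)))"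
    if "\<epsilon> > 0" for \<epsilon> using xi_local[OF T that] .
qed

definition "Z \<tau> = Ar *v zr \<tau> + fst (fnl ((zr \<tau>, 0) + wnl (zr \<tau>))) + Br *v u \<tau>"
definition "ee t = fst (x t) - zr t"

lemma zr_cont: "T \<ge> 0 \<Longrightarrow> continuous_on {0..T} zr"
  using sol_cont[OF z_sol[folded Z_def]] .

lemma Z_incr: "0 \<le> t \<Longrightarrow> t \<le> t' \<Longrightarrow> (Z has_integral (zr t' - zr t)) {t..t'}"
  using sol_incr[OF z_sol[folded Z_def]] .

lemma rho2_bound:
  assumes tau: "\<tau> \<ge> 0" and CAr: "\<And>v. norm (Ar *v v) \<le> CAr * norm v"
  shows "norm (fst (F \<tau>) - Z \<tau> - Ar *v ee t) \<le> CAr * norm (ee \<tau> - ee t) + Lf * norm (x \<tau> - x t)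
     + Lf * norm (xi t) + Lr * norm (ee t) + Lr * norm (zr \<tau> - zr t) + dbar"
proof -
  define a where "a = fst (x t)"
  define W where "W = WW a"
  define df where "df = fnl (x \<tau>) - fnl W"
  have xtW: "x t - W = (0, xi t)"
    unfolding W_def WW_def a_def xi_def by (cases "x t") simp
  have rW: "rnl a = fst (fnl W)" unfolding rnl_def W_def WW_eq[symmetric] by (rule refl)
  have eq: "fst (F \<tau>) - Z \<tau> - Ar *v ee t
     = Ar *v (ee \<tau> - ee t) + fst df + (rnl a - rnl (zr t)) + (rnl (zr t) - rnl (zr \<tau>)) + fst (d \<tau>)"
    unfolding F_fst Z_def df_def ee_def rnl_def[symmetric]
    by (simp add: rW matrix_vector_mult_diff_distrib algebra_simps)
  have n1: "norm (Ar *v (ee \<tau> - ee t)) \<le> CAr * norm (ee \<tau> - ee t)" by (rule CAr)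
  have ndf: "norm (fst df) \<le> Lf * norm (x \<tau> - x t) + Lf * norm (xi t)"
  proof -
    have "norm (fst df) \<le> norm df" by (metis norm_fst_le prod.collapse)
    also have "\<dots> \<le> Lf * norm (x \<tau> - W)" unfolding df_def by (rule f_lip')
    also have "norm (x \<tau> - W) \<le> norm (x \<tau> - x t) + norm (xi t)"
    proof -
      have "x \<tau> - W = (x \<tau> - x t) + (x t - W)" by simp
      then have "norm (x \<tau> - W) \<le> norm (x \<tau> - x t) + norm (x t - W)" by (metis norm_triangle_ineq)
      moreover have "norm (x t - W) = norm (xi t)" unfolding xtW by (simp add: norm_Pair)
      ultimately show ?thesis by simp
    qed
    then have "Lf * norm (x \<tau> - W) \<le> Lf * (norm (x \<tau> - x t) + norm (xi t))" using Lf0 by (rule mult_left_mono)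
    finally show ?thesis by (simp add: algebra_simps)
  qed
  have n3: "norm (rnl a - rnl (zr t)) \<le> Lr * norm (ee t)"
    using r_lip'[of a "zr t"] by (simp add: ee_def a_def)
  have n4: "norm (rnl (zr t) - rnl (zr \<tau>)) \<le> Lr * norm (zr \<tau> - zr t)"
    using r_lip'[of "zr t" "zr \<tau>"] by (simp add: norm_minus_commute)
  have n5: "norm (fst (d \<tau>)) \<le> dbar"
    using d_bound tau by (metis norm_fst_le prod.collapse order_trans)
  have "norm (Ar *v (ee \<tau> - ee t) + fst df + (rnl a - rnl (zr t)) + (rnl (zr t) - rnl (zr \<tau>)) + fst (d \<tau>))
     \<le> norm (Ar *v (ee \<tau> - ee t)) + norm (fst df) + norm (rnl a - rnl (zr t)) + norm (rnl (zr t) - rnl (zr \<tau>)) + norm (fst (d \<tau>))"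
    by (intro order_trans[OF norm_triangle_ineq] add_mono order_refl)
  also have "\<dots> \<le> CAr * norm (ee \<tau> - ee t) + (Lf * norm (x \<tau> - x t) + Lf * norm (xi t)) + Lr * norm (ee t)
      + Lr * norm (zr \<tau> - zr t) + dbar"
    using n1 ndf n3 n4 n5 by linarith
  finally show ?thesis unfolding eq by (simp add: algebra_simps)
qed

end

(* ---- Main5 ---- *)
context psetup begin

definition "k2 = max_re_eig Ar + Lr"
definition "q2 \<tau> = Lf * s \<tau> + dbar"

lemma ee_cont: "T \<ge> 0 \<Longrightarrow> continuous_on {0..T} ee"
  unfolding ee_def[abs_def] by (intro continuous_intros x_cont zr_cont)

lemma e_local:
  assumes T: "T \<ge> 0" and e: "\<epsilon> > 0"
  shows "\<exists>\<eta>>0. \<forall>t t'. 0 \<le> t \<longrightarrow> t \<le> t' \<longrightarrow> t' \<le> T \<longrightarrow> t' - t < \<eta> \<longrightarrow>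
     norm (ee t') \<le> norm (ee t) + (t' - t) * k2 * norm (ee t) + integral {t..t'} q2
        + \<epsilon> * ((t' - t) + integral {t..t'} (\<lambda>\<tau>. norm (u \<tau>)))"
proof -
  obtain CAr where CAr0: "CAr \<ge> 0" and CAr: "\<And>v. norm (Ar *v v) \<le> CAr * norm v" using mat_bound by blast
  have "bounded (ee ` {0..T})"
    by (intro compact_imp_bounded compact_continuous_image ee_cont[OF T]) simp
  then obtain Me where Me0: "Me > 0" and Me: "\<And>t. t \<in> {0..T} \<Longrightarrow> norm (ee t) \<le> Me"
    unfolding bounded_pos by auto
  define lam where "lam = max_re_eig Ar"
  have quad: "\<And>v. v \<bullet> (Ar *v v) \<le> lam * (norm v)^2"
    unfolding lam_def by (rule quad_form_le[OF A_block_r diag_le_max_re_eig[OF A_block_r]])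
  define c2 where "c2 = CAr + Lf + Lf + Lr"
  have c20: "c2 \<ge> 0" using CAr0 Lf0 Lr0 by (simp add: c2_def)
  define \<epsilon>1 where "\<epsilon>1 = \<epsilon> / (2 * (c2 + 1))"
  have \<epsilon>1: "\<epsilon>1 > 0" using e c20 by (simp add: \<epsilon>1_def)
  obtain \<eta>e where \<eta>e: "\<eta>e > 0" and ue: "\<forall>t\<in>{0..T}. \<forall>t'\<in>{0..T}. \<bar>t' - t\<bar> < \<eta>e \<longrightarrow> dist (ee t') (ee t) < \<epsilon>1"
    using uc_interval[OF ee_cont[OF T] \<epsilon>1] by auto
  obtain \<eta>x where \<eta>x: "\<eta>x > 0" and ux: "\<forall>t\<in>{0..T}. \<forall>t'\<in>{0..T}. \<bar>t' - t\<bar> < \<eta>x \<longrightarrow> dist (x t') (x t) < \<epsilon>1"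
    using uc_interval[OF x_cont[OF T] \<epsilon>1] by auto
  obtain \<eta>z where \<eta>z: "\<eta>z > 0" and uz: "\<forall>t\<in>{0..T}. \<forall>t'\<in>{0..T}. \<bar>t' - t\<bar> < \<eta>z \<longrightarrow> dist (zr t') (zr t) < \<epsilon>1"
    using uc_interval[OF zr_cont[OF T] \<epsilon>1] by auto
  obtain \<eta>s where \<eta>s: "\<eta>s > 0" and us: "\<forall>t\<in>{0..T}. \<forall>t'\<in>{0..T}. \<bar>t' - t\<bar> < \<eta>s \<longrightarrow> dist (s t') (s t) < \<epsilon>1"
    using uc_interval[OF s_cont[OF T] \<epsilon>1] by auto
  have "CAr^2 * Me \<ge> 0" using Me0 by simp
  then have dpos: "0 < CAr^2 * Me + 1" by linarith
  define \<eta> where "\<eta> = min (min (min \<eta>e \<eta>x) (min \<eta>z \<eta>s)) (min (1 / (2 * \<bar>lam\<bar> + 1)) (\<epsilon> / (2 * (CAr^2 * Me + 1))))"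
  have "0 < 2 * \<bar>lam\<bar> + 1" by simp
  then have \<eta>0: "\<eta> > 0" using \<eta>e \<eta>x \<eta>z \<eta>s e dpos unfolding \<eta>_def by simp
  show ?thesis
  proof (intro exI[of _ \<eta>] conjI \<eta>0 allI impI)
    fix t t' assume t0: "0 \<le> t" and tt: "t \<le> t'" and t'T: "t' \<le> T" and th: "t' - t < \<eta>"
    define h where "h = t' - t"
    have h0: "h \<ge> 0" using tt by (simp add: h_def)
    have tT: "t \<in> {0..T}" "t' \<in> {0..T}" using t0 tt t'T by auto
    define N where "N = norm (ee t)"
    have contt: "Henstock_Kurzweil_Integration.content {t..t'} = h" using tt by (simp add: h_def)
    have I1: "((\<lambda>\<tau>. fst (F \<tau>) - Z \<tau>) has_integral (ee t' - ee t)) {t..t'}"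
    proof -
      have "((\<lambda>\<tau>. fst (F \<tau>) - Z \<tau>) has_integral (fst (x t' - x t) - (zr t' - zr t))) {t..t'}"
        using has_integral_linear[OF F_incr[OF t0 tt] bounded_linear_fst] Z_incr[OF t0 tt]
        by (intro has_integral_diff) (auto simp: o_def)
      then show ?thesis by (simp add: ee_def algebra_simps)
    qed
    define \<rho> where "\<rho> \<tau> = fst (F \<tau>) - Z \<tau> - Ar *v ee t" for \<tau>
    have \<rho>I: "(\<rho> has_integral (ee t' - ee t - h *\<^sub>R (Ar *v ee t))) {t..t'}"
      unfolding \<rho>_def using has_integral_diff[OF I1 has_integral_const_real[of "Ar *v ee t" t t']] contt by simp
    have decomp: "ee t' = (ee t + h *\<^sub>R (Ar *v ee t)) + integral {t..t'} \<rho>"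
      using integral_unique[OF \<rho>I] by simp
    have hl: "h * \<bar>lam\<bar> \<le> 1/2"
    proof -
      have "h < 1 / (2 * \<bar>lam\<bar> + 1)" using th by (simp add: h_def \<eta>_def)
      then have "h * (2 * \<bar>lam\<bar> + 1) < 1" by (simp add: field_simps)
      then show ?thesis using h0 by (simp add: algebra_simps)
    qed
    have P1: "norm (ee t + h *\<^sub>R (Ar *v ee t)) \<le> (1 + h * lam + h^2 * CAr^2) * N"
      unfolding N_def by (rule ln_step[OF quad CAr h0 hl])
    have hsq: "h^2 * CAr^2 * N \<le> \<epsilon> / 2 * h"
    proof -
      have "h \<le> \<epsilon> / (2 * (CAr^2 * Me + 1))" using th by (simp add: h_def \<eta>_def)
      moreover have D2: "0 < 2 * (CAr^2 * Me + 1)" using dpos by simp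
      ultimately have "h * (2 * (CAr^2 * Me + 1)) \<le> \<epsilon>" using pos_le_divide_eq[OF D2] by blast
      moreover have "h * (2 * (CAr^2 * Me + 1)) = 2 * (h * (CAr^2 * Me)) + 2 * h" by (simp add: algebra_simps)
      ultimately have "h * (CAr^2 * Me) \<le> \<epsilon> / 2" using h0 by linarith
      moreover have "h * (CAr^2 * N) \<le> h * (CAr^2 * Me)"
        using Me[OF tT(1)] h0 by (intro mult_left_mono) (auto simp: N_def)
      ultimately have "h * (CAr^2 * N) \<le> \<epsilon> / 2" by linarith
      then have "h * (h * (CAr^2 * N)) \<le> h * (\<epsilon> / 2)" using h0 by (rule mult_left_mono)
      then show ?thesis by (simp add: power2_eq_square algebra_simps)
    qed
    have si: "s integrable_on {t..t'}"
      using integrable_subinterval_real[OF integrable_continuous_interval[OF s_cont[OF T]], of t t'] t0 t'T by auto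
    have q2i: "q2 integrable_on {t..t'}"
      unfolding q2_def[abs_def] by (intro integrable_add integrable_const_ivl integrable_cmul[where 'b=real, simplified] si)
    define gf where "gf \<tau> = (c2 * \<epsilon>1 + Lr * N) + q2 \<tau>" for \<tau>
    have gfi: "gf integrable_on {t..t'}" unfolding gf_def by (intro integrable_add integrable_const_ivl q2i)
    have gfint: "integral {t..t'} gf = h * (c2 * \<epsilon>1 + Lr * N) + integral {t..t'} q2"
      unfolding gf_def using integral_add[OF integrable_const_ivl q2i] contt by simp
    have \<rho>b: "norm (\<rho> \<tau>) \<le> gf \<tau>" if \<tau>: "\<tau> \<in> {t..t'}" for \<tau>
    proof -
      have \<tau>T: "\<tau> \<in> {0..T}" using \<tau> t0 t'T by auto
      have d\<tau>: "\<bar>\<tau> - t\<bar> < \<eta>e" "\<bar>\<tau> - t\<bar> < \<eta>x" "\<bar>\<tau> - t\<bar> < \<eta>z" "\<bar>t - \<tau>\<bar> < \<eta>s" using \<tau> th by (auto simp: \<eta>_def)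
      have ne: "norm (ee \<tau> - ee t) \<le> \<epsilon>1" using ue \<tau>T tT d\<tau>(1) by (auto simp: dist_norm intro: less_imp_le)
      have nx: "norm (x \<tau> - x t) \<le> \<epsilon>1" using ux \<tau>T tT d\<tau>(2) by (auto simp: dist_norm intro: less_imp_le)
      have nz: "norm (zr \<tau> - zr t) \<le> \<epsilon>1" using uz \<tau>T tT d\<tau>(3) by (auto simp: dist_norm intro: less_imp_le)
      have "dist (s t) (s \<tau>) < \<epsilon>1" using us \<tau>T tT d\<tau>(4) by blast
      then have st: "s t \<le> s \<tau> + \<epsilon>1" by (simp add: dist_real_def)
      have xit: "norm (xi t) \<le> s \<tau> + \<epsilon>1" using xi_bound[OF t0] st by linarith
      have b1: "CAr * norm (ee \<tau> - ee t) \<le> CAr * \<epsilon>1" using ne CAr0 by (rule mult_left_mono)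
      have b2: "Lf * norm (x \<tau> - x t) \<le> Lf * \<epsilon>1" using nx Lf0 by (rule mult_left_mono)
      have b3: "Lf * norm (xi t) \<le> Lf * s \<tau> + Lf * \<epsilon>1"
        using mult_left_mono[OF xit Lf0] by (simp add: algebra_simps)
      have b4: "Lr * norm (zr \<tau> - zr t) \<le> Lr * \<epsilon>1" using nz Lr0 by (rule mult_left_mono)
      have "norm (\<rho> \<tau>) \<le> CAr * norm (ee \<tau> - ee t) + Lf * norm (x \<tau> - x t)
          + Lf * norm (xi t) + Lr * norm (ee t) + Lr * norm (zr \<tau> - zr t) + dbar"
        unfolding \<rho>_def using rho2_bound[OF _ CAr, of \<tau> t] \<tau>T by simp
      also have "\<dots> \<le> CAr * \<epsilon>1 + Lf * \<epsilon>1 + (Lf * s \<tau> + Lf * \<epsilon>1) + Lr * N + Lr * \<epsilon>1 + dbar"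
        using b1 b2 b3 b4 unfolding N_def by linarith
      also have "\<dots> = gf \<tau>" by (simp add: gf_def c2_def q2_def algebra_simps)
      finally show ?thesis .
    qed
    have P2: "norm (integral {t..t'} \<rho>) \<le> h * (c2 * \<epsilon>1 + Lr * N) + integral {t..t'} q2"
      using integral_norm_bound_integral[OF has_integral_integrable[OF \<rho>I] gfi \<rho>b] gfint by simp
    have ui: "(\<lambda>\<tau>. norm (u \<tau>)) integrable_on {t..t'}"
      using integrable_subinterval_real[OF u_int[OF T], of t t'] t0 t'T by auto
    have ui0: "integral {t..t'} (\<lambda>\<tau>. norm (u \<tau>)) \<ge> 0" by (rule integral_nonneg[OF ui]) simp
    define U where "U = integral {t..t'} (\<lambda>\<tau>. norm (u \<tau>))"
    have e1c: "h * (c2 * \<epsilon>1) \<le> \<epsilon> / 2 * h"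
    proof -
      have "c2 * \<epsilon>1 \<le> \<epsilon> / 2" using c20 e by (simp add: \<epsilon>1_def field_simps)
      then show ?thesis using h0 by (metis mult.commute mult_left_mono)
    qed
    have eU: "\<epsilon> * h \<le> \<epsilon> * (h + U)" using ui0 e by (simp add: U_def)
    have "norm (ee t') \<le> norm (ee t + h *\<^sub>R (Ar *v ee t)) + norm (integral {t..t'} \<rho>)"
      unfolding decomp by (rule norm_triangle_ineq)
    also have "\<dots> \<le> (1 + h * lam + h^2 * CAr^2) * N + (h * (c2 * \<epsilon>1 + Lr * N) + integral {t..t'} q2)"
      using P1 P2 by linarith
    also have "\<dots> = N + h * k2 * N + integral {t..t'} q2 + (h^2 * CAr^2 * N + h * (c2 * \<epsilon>1))"
      by (simp add: k2_def lam_def algebra_simps)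
    also have "\<dots> \<le> N + h * k2 * N + integral {t..t'} q2 + \<epsilon> * (h + U)"
      using hsq e1c eU by (simp add: algebra_simps)
    finally show "norm (ee t') \<le> norm (ee t) + (t' - t) * k2 * norm (ee t) + integral {t..t'} q2
        + \<epsilon> * ((t' - t) + integral {t..t'} (\<lambda>\<tau>. norm (u \<tau>)))"
      by (simp add: N_def h_def U_def)
  qed
qed

lemma \<delta>_sol': "\<forall>t\<ge>0. ((\<lambda>\<tau>. k2 * \<delta> \<tau> + q2 \<tau>) has_integral (\<delta> t - \<delta> 0)) {0..t}"
proof -
  have "(\<lambda>\<tau>. k2 * \<delta> \<tau> + q2 \<tau>) = (\<lambda>\<tau>. (max_re_eig Ar + Lr) * \<delta> \<tau> + Lf * s \<tau> + dbar)"
    by (rule ext) (simp add: k2_def q2_def algebra_simps)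
  then show ?thesis using \<delta>_sol by simp
qed

lemma ee_bound: assumes T: "T \<ge> 0" shows "norm (ee T) \<le> \<delta> T"
proof (rule gc[where N="\<lambda>t. norm (ee t)" and S=\<delta> and k=k2 and q=q2 and rho="\<lambda>\<tau>. norm (u \<tau>)", OF T])
  show "norm (ee 0) \<le> \<delta> 0" using init_r by (simp add: ee_def)
  show "continuous_on {0..T} \<delta>" using sol_cont[OF \<delta>_sol' T] .
  show "((\<lambda>\<tau>. k2 * \<delta> \<tau> + q2 \<tau>) has_integral (\<delta> t - \<delta> 0)) {0..t}" if "t \<in> {0..T}" for t
    using \<delta>_sol' that by auto
  show "(\<lambda>\<tau>. norm (u \<tau>)) integrable_on {0..T}" using u_int[OF T] .
  show "\<And>\<tau>. 0 \<le> norm (u \<tau>)" by simp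
  show "\<exists>\<eta>>0. \<forall>t t'. 0 \<le> t \<longrightarrow> t \<le> t' \<longrightarrow> t' \<le> T \<longrightarrow> t' - t < \<eta> \<longrightarrow>
        norm (ee t') \<le> norm (ee t) + (t' - t) * k2 * norm (ee t) + integral {t..t'} q2 + \<epsilon> * ((t' - t) + integral {t..t'} (\<lambda>\<tau>. norm (u \<tau>)))"
    if "\<epsilon> > 0" for \<epsilon> using e_local[OF T that] .
qed

lemma final: "\<forall>t\<ge>0. norm (snd (x t) - snd (wnl (fst (x t)))) \<le> s t
              \<and> norm (fst (x t) - zr t) \<le> \<delta> t"
  using xi_bound ee_bound by (simp add: xi_def ee_def)

end

theorem proposition1:
  fixes Ar :: "real^('r::{finite,linorder})^('r::{finite,linorder})" and An :: "real^('c::{finite,linorder})^('c::{finite,linorder})"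
    and Br :: "real^('m::finite)^('r::{finite,linorder})" and Bn :: "real^'m^('c::{finite,linorder})"
    and fnl :: "(real^('r::{finite,linorder})) \<times> (real^('c::{finite,linorder})) \<Rightarrow> (real^('r::{finite,linorder})) \<times> (real^('c::{finite,linorder}))"
    and wnl :: "real^('r::{finite,linorder}) \<Rightarrow> (real^('r::{finite,linorder})) \<times> (real^('c::{finite,linorder}))"
    and wnl' :: "real^('r::{finite,linorder}) \<Rightarrow> ((real^('r::{finite,linorder})) \<Rightarrow>\<^sub>L ((real^('r::{finite,linorder})) \<times> (real^('c::{finite,linorder}))))"
    and g :: "real^('r::{finite,linorder}) \<Rightarrow> real^('r::{finite,linorder})"
    and Lf Lw Lr dbar :: real
    and u :: "real \<Rightarrow> real^'m" and d :: "real \<Rightarrow> (real^('r::{finite,linorder})) \<times> (real^('c::{finite,linorder}))"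
    and x :: "real \<Rightarrow> (real^('r::{finite,linorder})) \<times> (real^('c::{finite,linorder}))" and zr :: "real \<Rightarrow> real^('r::{finite,linorder})"
    and s \<delta> :: "real \<Rightarrow> real"
  assumes A_block_r: "real_block_diag Ar" and A_block_n: "real_block_diag An"
    and A_order_r: "ordered_slow_to_fast Ar" and A_order_n: "ordered_slow_to_fast An"
    and A_order_rn: "\<forall>i j. An $ j $ j \<le> Ar $ i $ i"
    and A_hurwitz: "hurwitz Ar" "hurwitz An"
    and f_smooth: "smooth_everywhere fnl"
    and f_zero: "fnl 0 = 0"
    and f_deriv0: "(fnl has_derivative (\<lambda>_. 0)) (at 0)"
    and f_lip: "Lf-lipschitz_on UNIV fnl"
    and w_deriv: "\<forall>xr. (wnl has_derivative blinfun_apply (wnl' xr)) (at xr)"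
    and w_C1: "continuous_on UNIV wnl'"
    and w_lip: "Lw-lipschitz_on UNIV wnl"
    and W_inv: "\<forall>xr. fst ((xr, 0) + wnl xr) = xr"
    and W_invariant: "\<forall>xr. (Ar *v fst ((xr, 0) + wnl xr), An *v snd ((xr, 0) + wnl xr))
                          + fnl ((xr, 0) + wnl xr)
                        = (g xr, 0) + blinfun_apply (wnl' xr) (g xr)"
    and r_lip: "Lr-lipschitz_on UNIV (\<lambda>xr. fst (fnl ((xr, 0) + wnl xr)))"
    and u_loc_int: "\<forall>T\<ge>0. u absolutely_integrable_on {0..T}"
    and d_bound: "\<forall>t\<ge>0. norm (d t) \<le> dbar"
    and x_sol: "\<forall>t\<ge>0. ((\<lambda>\<tau>. (Ar *v fst (x \<tau>), An *v snd (x \<tau>)) + fnl (x \<tau>)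
                              + (Br *v u \<tau>, Bn *v u \<tau>) + d \<tau>)
                        has_integral (x t - x 0)) {0..t}"
    and z_sol: "\<forall>t\<ge>0. ((\<lambda>\<tau>. Ar *v zr \<tau> + fst (fnl ((zr \<tau>, 0) + wnl (zr \<tau>))) + Br *v u \<tau>)
                        has_integral (zr t - zr 0)) {0..t}"
    and s_sol: "\<forall>t\<ge>0. ((\<lambda>\<tau>. max_re_eig An * s \<tau> + (1 + Lw) * (Lf * s \<tau> + dbar)
                              + norm (Bn *v u \<tau>) + Lw * norm (Br *v u \<tau>))
                        has_integral (s t - s 0)) {0..t}"
    and \<delta>_sol: "\<forall>t\<ge>0. ((\<lambda>\<tau>. (max_re_eig Ar + Lr) * \<delta> \<tau> + Lf * s \<tau> + dbar)
                        has_integral (\<delta> t - \<delta> 0)) {0..t}"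
    and s0: "s 0 \<ge> 0" and \<delta>0: "\<delta> 0 \<ge> 0"
    and init_n: "norm (snd (x 0) - snd (wnl (fst (x 0)))) \<le> s 0"
    and init_r: "norm (fst (x 0) - zr 0) \<le> \<delta> 0"
  shows "\<forall>t\<ge>0. norm (snd (x t) - snd (wnl (fst (x t)))) \<le> s t
              \<and> norm (fst (x t) - zr t) \<le> \<delta> t"
  proof -
  interpret psetup Ar An Br Bn fnl wnl wnl' g Lf Lw Lr dbar u d x zr s \<delta>
    by (rule psetup.intro[OF A_block_r A_block_n f_zero f_lip w_deriv w_C1 w_lip W_inv W_invariant
        r_lip u_loc_int d_bound x_sol z_sol s_sol \<delta>_sol init_n init_r])
  show ?thesis by (rule final)
qed

end
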